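(* Let $F\in L^p(\mu)$, $p>1$. Then $E[F\mid U_\lambda=w]\in L^{p'}(\mu)$ for every $p'<p$, and the map $\lambda\mapsto E[F\mid U_\lambda=w]$ is weakly continuous with values in $L^{p'}(\mu)$ for every $p'<p$.
   Context: Setting: $W=C_0([0,1],\mathbb R^d)$ with Wiener measure $\mu$, completed Brownian filtration $(\mathcal F_t)$, Cameron–Martin space $H$ ($|h|_H^2=\int_0^1|\dot h|^2ds$). For real $\lambda$, $U_\lambda(t,w)=W_t(w)+\int_0^t\dot u_\lambda(s,w)ds$ with $\dot u_\lambda$ adapted and square integrable, $u_\lambda=\int_0^\cdot\dot u_\lambda ds$, $E[\rho(-\delta u_\lambda)]=1$ where $\rho(-\delta u_\lambda)=\exp(-\int_0^1\dot u_\lambda dW-\frac12\int_0^1|\dot u_\lambda|^2ds)$; $\lambda\mapsto\dot u_\lambda$ is differentiable in $L^2$ with $u_\lambda$ essentially bounded uniformly in $\lambda$. $L_\lambda=dU_\lambda\mu/d\mu$, and it is assumed (as established under the hypotheses of the preceding theorem) that $\lambda\mapsto L_\lambda$ and $\lambda\mapsto L_\lambda^{-1}$ are a.s. and strongly continuous in $L^p(\mu)$. $E[F\mid U_\lambda=w]$ denotes a measurable $g$ with $E[F\mid U_\lambda]=g\circ U_\lambda$ a.s. *)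

theory Defs
  imports "HOL-Probability.Probability"
begin

text \<open>Paths in R^d, indexed by the finite type 'd.  The path space
  W = C_0([0,1],R^d) is represented by continuous functions on [0,1]
  vanishing at 0, normalised to be 0 outside [0,1].\<close>

type_synonym 'd path = "real \<Rightarrow> real^'d"

definition path_carrier :: "'d::finite path set" where
  "path_carrier = {w. continuous_on {0..1} w \<and> w 0 = 0 \<and> (\<forall>t. t \<notin> {0..1} \<longrightarrow> w t = 0)}"

text \<open>Sigma-algebra generated by the coordinate maps W_r, r in [0,s]
  (the raw Brownian filtration); for s = 1 this is the Borel sigma-algebra of W.\<close>
definition filt :: "real \<Rightarrow> 'd::finite path measure" where
  "filt s = sigma path_carrier
     {{w \<in> path_carrier. w r \<in> A} | r A. r \<in> {0..s} \<and> A \<in> sets borel}"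

definition path_space :: "'d::finite path measure" where
  "path_space = filt 1"

definition wiener_measure :: "'d::finite path measure \<Rightarrow> bool" where
  "wiener_measure \<mu> \<longleftrightarrow> prob_space \<mu> \<and> sets \<mu> = sets path_space \<and>
     (\<forall>(n::nat) (t::nat \<Rightarrow> real). t 0 = 0 \<and> t n \<le> 1 \<and> (\<forall>k<n. t k < t (Suc k)) \<longrightarrow>
        prob_space.indep_vars \<mu> (\<lambda>_. borel)
           (\<lambda>(k, i) w. (w (t (Suc k)) - w (t k)) $ i) ({..<n} \<times> UNIV) \<and>
        (\<forall>k<n. \<forall>i. distributed \<mu> lborel (\<lambda>w. (w (t (Suc k)) - w (t k)) $ i)
                       (normal_density 0 (sqrt (t (Suc k) - t k)))))"

text \<open>A set is in the completed filtration F_s iff it is measurable w.r.t. F_s up to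
  a mu-null set; a process is adapted to the completed filtration if for each s its
  time-s value agrees a.e. with an F_s-measurable map.\<close>
definition adapted :: "'d::finite path measure \<Rightarrow> (real \<Rightarrow> 'd path \<Rightarrow> real^'d) \<Rightarrow> bool" where
  "adapted \<mu> v \<longleftrightarrow> (\<forall>s\<in>{0..1}. \<exists>f \<in> borel_measurable (filt s). AE w in \<mu>. v s w = f w)"

definition time_path :: "'d::finite path measure \<Rightarrow> (real \<times> 'd path) measure" where
  "time_path \<mu> = restrict_space lborel {0..1} \<Otimes>\<^sub>M \<mu>"

definition sq_int_process :: "'d::finite path measure \<Rightarrow> (real \<Rightarrow> 'd path \<Rightarrow> real^'d) \<Rightarrow> bool" where
  "sq_int_process \<mu> v \<longleftrightarrow> (\<lambda>(s, w). v s w) \<in> borel_measurable (time_path \<mu>) \<and>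
     integrable (time_path \<mu>) (\<lambda>(s, w). (norm (v s w))\<^sup>2)"

definition simple_proc :: "nat \<Rightarrow> (nat \<Rightarrow> real) \<Rightarrow> (nat \<Rightarrow> 'd path \<Rightarrow> real^'d) \<Rightarrow> real \<Rightarrow> 'd::finite path \<Rightarrow> real^'d" where
  "simple_proc n t \<xi> s w = (\<Sum>k<n. indicator {t k..<t (Suc k)} s *\<^sub>R \<xi> k w)"

definition simple_int :: "nat \<Rightarrow> (nat \<Rightarrow> real) \<Rightarrow> (nat \<Rightarrow> 'd path \<Rightarrow> real^'d) \<Rightarrow> 'd::finite path \<Rightarrow> real" where
  "simple_int n t \<xi> w = (\<Sum>k<n. \<xi> k w \<bullet> (w (t (Suc k)) - w (t k)))"

definition simple_adapted :: "nat \<Rightarrow> (nat \<Rightarrow> real) \<Rightarrow> (nat \<Rightarrow> 'd path \<Rightarrow> real^'d) \<Rightarrow> bool" where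
  "simple_adapted n t \<xi> \<longleftrightarrow> t 0 = 0 \<and> t n = 1 \<and> (\<forall>k<n. t k < t (Suc k)) \<and>
     (\<forall>k<n. \<xi> k \<in> borel_measurable (filt (t k)) \<and> (\<exists>C. \<forall>w. norm (\<xi> k w) \<le> C))"

text \<open>I is (a version of) the Ito integral int_0^1 v dW: the L^2(mu) limit of the
  integrals of simple adapted processes converging to v in L^2(dt x d mu).\<close>
definition ito_integral :: "'d::finite path measure \<Rightarrow> (real \<Rightarrow> 'd path \<Rightarrow> real^'d) \<Rightarrow> ('d path \<Rightarrow> real) \<Rightarrow> bool" where
  "ito_integral \<mu> v I \<longleftrightarrow> I \<in> borel_measurable \<mu> \<and> integrable \<mu> (\<lambda>w. (I w)\<^sup>2) \<and>
     (\<exists>n t \<xi>. (\<forall>m. simple_adapted (n m) (t m) (\<xi> m)) \<and>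
        (\<lambda>m. \<integral>(s, w). (norm (simple_proc (n m) (t m) (\<xi> m) s w - v s w))\<^sup>2 \<partial>time_path \<mu>)
           \<longlonglongrightarrow> 0 \<and>
        (\<lambda>m. \<integral>w. (I w - simple_int (n m) (t m) (\<xi> m) w)\<^sup>2 \<partial>\<mu>) \<longlonglongrightarrow> 0)"

text \<open>|u|_H^2 for u = int_0^. v ds.\<close>
definition H_norm_sq :: "(real \<Rightarrow> real^'d::finite) \<Rightarrow> real" where
  "H_norm_sq v = (LINT s:{0..1}|lborel. (norm (v s))\<^sup>2)"

text \<open>U(t,w) = W_t(w) + int_0^t v(s,w) ds (on the full-measure set where
  s \<mapsto> v s w is square integrable; the identity elsewhere).\<close>
definition perturb :: "(real \<Rightarrow> 'd path \<Rightarrow> real^'d) \<Rightarrow> 'd::finite path \<Rightarrow> 'd path" where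
  "perturb v w = (if set_integrable lborel {0..1} (\<lambda>s. (norm (v s w))\<^sup>2)
     then (\<lambda>t. if t \<in> {0..1} then w t + (LINT s:{0..t}|lborel. v s w) else 0)
     else w)"

end

theory Submission
  imports Defs "HOL-Probability.Probability"
begin



lemma vitali_V:
  fixes Z :: "nat \<Rightarrow> 'a \<Rightarrow> real" and Zl Gl :: "'a \<Rightarrow> real" and G :: "nat \<Rightarrow> 'a \<Rightarrow> real"
  assumes Zm: "\<And>n. Z n \<in> borel_measurable M" and Zlm: "Zl \<in> borel_measurable M"
    and lim: "AE x in M. (\<lambda>n. Z n x) \<longlonglongrightarrow> Zl x"
    and dom: "\<And>n. AE x in M. \<bar>Z n x\<bar> \<le> G n x"
    and Gi: "\<And>n. integrable M (G n)" and Gli: "integrable M Gl"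
    and GL1: "(\<lambda>n. \<integral>x. \<bar>G n x - Gl x\<bar> \<partial>M) \<longlonglongrightarrow> 0"
  shows "(\<lambda>n. \<integral>x. \<bar>Z n x - Zl x\<bar> \<partial>M) \<longlonglongrightarrow> 0"
proof -
  have [measurable]: "Z n \<in> borel_measurable M" "G n \<in> borel_measurable M" for n using Zm Gi by auto
  have [measurable]: "Zl \<in> borel_measurable M" "Gl \<in> borel_measurable M" using Zlm Gli by auto
  have "\<exists>r::nat\<Rightarrow>nat. strict_mono r \<and> (AE x in M. (\<lambda>n. G (r n) x - Gl x) \<longlonglongrightarrow> 0)"
    by (rule tendsto_L1_AE_subseq) (use Gi Gli GL1 in auto)
  then obtain r :: "nat \<Rightarrow> nat" where r: "strict_mono r" and rlim: "AE x in M. (\<lambda>n. G (r n) x - Gl x) \<longlonglongrightarrow> 0"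
    by blast
  have Zb: "AE x in M. \<bar>Zl x\<bar> \<le> Gl x"
  proof -
    have "AE x in M. \<forall>n. \<bar>Z n x\<bar> \<le> G n x" using dom by (simp add: AE_all_countable)
    then show ?thesis using rlim lim
    proof eventually_elim
      case (elim x)
      have l1: "(\<lambda>n. \<bar>Z (r n) x\<bar>) \<longlonglongrightarrow> \<bar>Zl x\<bar>"
        using tendsto_rabs[OF LIMSEQ_subseq_LIMSEQ[OF elim(3) r]] by (simp add: o_def)
      have l2: "(\<lambda>n. G (r n) x) \<longlonglongrightarrow> Gl x"
        using tendsto_add[OF elim(2) tendsto_const[of "Gl x"]] by simp
      show ?case by (rule LIMSEQ_le[OF l1 l2]) (use elim(1) in auto)
    qed
  qed
  define D where "D n x = min \<bar>Z n x - Zl x\<bar> (2 * Gl x)" for n x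
  have [measurable]: "D n \<in> borel_measurable M" for n unfolding D_def by measurable
  have Dlim: "(\<lambda>n. integral\<^sup>L M (D n)) \<longlonglongrightarrow> integral\<^sup>L M (\<lambda>x. 0)"
  proof (rule integral_dominated_convergence[where w="\<lambda>x. 2 * Gl x"])
    show "integrable M (\<lambda>x. 2 * Gl x)" using Gli by auto
    show "AE x in M. (\<lambda>n. D n x) \<longlonglongrightarrow> 0" using lim Zb
    proof eventually_elim
      case (elim x)
      have "(\<lambda>n. \<bar>Z n x - Zl x\<bar>) \<longlonglongrightarrow> \<bar>Zl x - Zl x\<bar>"
        by (intro tendsto_intros elim(1))
      then have "(\<lambda>n. min \<bar>Z n x - Zl x\<bar> (2 * Gl x)) \<longlonglongrightarrow> min 0 (2 * Gl x)"
        by (intro tendsto_min) auto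
      then show ?case using elim(2) unfolding D_def by (simp add: min_def)
    qed
    show "AE x in M. norm (D n x) \<le> 2 * Gl x" for n using Zb
      by eventually_elim (auto simp: D_def)
  qed auto
  have bnd: "AE x in M. \<bar>Z n x - Zl x\<bar> \<le> D n x + \<bar>G n x - Gl x\<bar>" for n
    using dom[of n] Zb
  proof eventually_elim
    case (elim x)
    then show ?case unfolding D_def by (auto simp: min_def)
  qed
  have intD: "integrable M (D n)" for n
    by (rule Bochner_Integration.integrable_bound[where f="\<lambda>x. 2 * Gl x"]) (use Gli Zb in \<open>auto simp: D_def\<close>)
  have intG: "integrable M (\<lambda>x. \<bar>G n x - Gl x\<bar>)" for n using Gi Gli by auto
  have intZ: "integrable M (\<lambda>x. \<bar>Z n x - Zl x\<bar>)" for n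
  proof (rule Bochner_Integration.integrable_bound[where f="\<lambda>x. D n x + \<bar>G n x - Gl x\<bar>"])
    show "integrable M (\<lambda>x. D n x + \<bar>G n x - Gl x\<bar>)" using intD intG by auto
    show "AE x in M. norm \<bar>Z n x - Zl x\<bar> \<le> norm (D n x + \<bar>G n x - Gl x\<bar>)"
      using bnd[of n] Zb by eventually_elim (auto simp: D_def)
  qed auto
  show ?thesis
  proof (rule tendsto_sandwich[where f="\<lambda>n. 0" and h="\<lambda>n. integral\<^sup>L M (D n) + (\<integral>x. \<bar>G n x - Gl x\<bar> \<partial>M)"])
    show "\<forall>\<^sub>F n in sequentially. 0 \<le> (\<integral>x. \<bar>Z n x - Zl x\<bar> \<partial>M)" by auto
    show "\<forall>\<^sub>F n in sequentially. (\<integral>x. \<bar>Z n x - Zl x\<bar> \<partial>M) \<le> integral\<^sup>L M (D n) + (\<integral>x. \<bar>G n x - Gl x\<bar> \<partial>M)"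
    proof (intro always_eventually allI)
      fix n
      have "(\<integral>x. \<bar>Z n x - Zl x\<bar> \<partial>M) \<le> (\<integral>x. D n x + \<bar>G n x - Gl x\<bar> \<partial>M)"
        by (rule integral_mono_AE[OF intZ _ bnd]) (use intD intG in auto)
      also have "\<dots> = integral\<^sup>L M (D n) + (\<integral>x. \<bar>G n x - Gl x\<bar> \<partial>M)"
        using intD intG by auto
      finally show "(\<integral>x. \<bar>Z n x - Zl x\<bar> \<partial>M) \<le> integral\<^sup>L M (D n) + (\<integral>x. \<bar>G n x - Gl x\<bar> \<partial>M)" .
    qed
    show "(\<lambda>n. integral\<^sup>L M (D n) + (\<integral>x. \<bar>G n x - Gl x\<bar> \<partial>M)) \<longlonglongrightarrow> 0"
      using tendsto_add[OF Dlim GL1] by simp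
  qed auto
qed



lemma sub_principle:
  fixes x :: "nat \<Rightarrow> real"
  assumes "\<And>r::nat\<Rightarrow>nat. strict_mono r \<Longrightarrow> \<exists>s::nat\<Rightarrow>nat. strict_mono s \<and> (\<lambda>n. x (r (s n))) \<longlonglongrightarrow> a"
  shows "x \<longlonglongrightarrow> a"
proof (rule ccontr)
  assume "\<not> x \<longlonglongrightarrow> a"
  then obtain e where e: "e > 0" and fr: "\<exists>\<^sub>F n in sequentially. \<not> dist (x n) a < e"
    unfolding tendsto_iff by (auto simp: not_eventually)
  then have "infinite {n. \<not> dist (x n) a < e}"
    by (simp add: frequently_cofinite[symmetric] cofinite_eq_sequentially)
  then obtain r :: "nat \<Rightarrow> nat" where r: "strict_mono r" "\<And>n. r n \<in> {n. \<not> dist (x n) a < e}"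
    using infinite_enumerate by blast
  obtain s where s: "strict_mono s" "(\<lambda>n. x (r (s n))) \<longlonglongrightarrow> a" using assms r(1) by blast
  then have "eventually (\<lambda>n. dist (x (r (s n))) a < e) sequentially" using e by (simp add: tendsto_iff)
  then obtain n where "dist (x (r (s n))) a < e" by (auto dest: eventually_happens)
  then show False using r(2)[of "s n"] by simp
qed

lemma cont_by_subseq:
  fixes \<Phi> :: "real \<Rightarrow> real"
  assumes "\<And>l k. k \<longlonglongrightarrow> l \<Longrightarrow> \<exists>r::nat\<Rightarrow>nat. strict_mono r \<and> (\<lambda>n. \<Phi> (k (r n))) \<longlonglongrightarrow> \<Phi> l"
  shows "continuous_on UNIV \<Phi>"
proof (rule continuous_on_sequentiallyI)
  fix k :: "nat \<Rightarrow> real" and l assume kl: "k \<longlonglongrightarrow> l"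
  show "(\<lambda>n. \<Phi> (k n)) \<longlonglongrightarrow> \<Phi> l"
  proof (rule sub_principle)
    fix r :: "nat \<Rightarrow> nat" assume "strict_mono r"
    then have "(\<lambda>n. k (r n)) \<longlonglongrightarrow> l" using LIMSEQ_subseq_LIMSEQ[OF kl] by (simp add: o_def)
    then show "\<exists>s. strict_mono s \<and> (\<lambda>n. \<Phi> (k (r (s n)))) \<longlonglongrightarrow> \<Phi> l" using assms by blast
  qed
qed


lemma powr_le_1_plus: fixes x t :: real assumes "0 \<le> x" "0 < t" shows "x powr t \<le> 1 + x powr (t + 1)"
proof (cases "x \<le> 1")
  case True
  then have "x powr t \<le> 1" using assms by (simp add: powr_le1)
  then show ?thesis using powr_ge_zero[of x "t+1"] by linarith
next
  case False
  then have "x powr t \<le> x powr (t+1)" by (intro powr_mono) auto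
  then show ?thesis by linarith
qed

lemma key_ineq:
  fixes a b r s :: real
  assumes a: "0 \<le> a" and b: "0 < b" and s: "0 < s" and r: "0 < r"
  shows "a powr r \<le> b * a powr (r + s) + (1 + (1 / b) powr (r / s + 1))"
proof (cases "a = 0")
  case True
  then show ?thesis using powr_ge_zero[of "1/b" "r/s+1"] by simp
next
  case False
  then have a0: "0 < a" using a by simp
  have nn: "0 \<le> b * a powr (r + s)" "0 \<le> 1 + (1 / b) powr (r / s + 1)"
    using b by (auto intro: add_nonneg_nonneg)
  show ?thesis
  proof (cases "1 \<le> b * a powr s")
    case True
    have "a powr r = a powr r * 1" by simp
    also have "\<dots> \<le> a powr r * (b * a powr s)" using True by (intro mult_left_mono) auto
    also have "\<dots> = b * a powr (r + s)" by (simp add: powr_add)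
    finally show ?thesis using nn by linarith
  next
    case False
    then have "a powr s < 1 / b" using b by (simp add: field_simps)
    then have "(a powr s) powr (1/s) \<le> (1/b) powr (1/s)" using s a0 by (intro powr_mono2) auto
    then have "a \<le> (1/b) powr (1/s)" using s a0 by (simp add: powr_powr)
    then have "a powr r \<le> ((1/b) powr (1/s)) powr r" using r a0 by (intro powr_mono2) auto
    also have "\<dots> = (1/b) powr (r/s)" by (simp add: powr_powr)
    also have "\<dots> \<le> 1 + (1/b) powr (r/s + 1)" using b s r by (intro powr_le_1_plus) auto
    finally show ?thesis using nn by linarith
  qed
qed

locale S1 = prob_space \<mu> for \<mu> :: "'a measure" +
  fixes U :: "real \<Rightarrow> 'a \<Rightarrow> 'a" and L g :: "real \<Rightarrow> 'a \<Rightarrow> real" and F :: "'a \<Rightarrow> real" and p :: real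
  assumes U_meas: "\<And>l. U l \<in> measurable \<mu> \<mu>"
    and L_meas: "\<And>l. L l \<in> borel_measurable \<mu>"
    and L_nonneg: "\<And>l w. 0 \<le> L l w"
    and L_density: "\<And>l. distr \<mu> \<mu> (U l) = density \<mu> (\<lambda>w. ennreal (L l w))"
    and L_pos: "\<And>l. AE w in \<mu>. 0 < L l w"
    and Linv_int: "\<And>q l. 1 \<le> q \<Longrightarrow> integrable \<mu> (\<lambda>w. \<bar>1 / L l w\<bar> powr q)"
    and p_gt: "1 < p"
    and F_meas: "F \<in> borel_measurable \<mu>"
    and F_Lp: "integrable \<mu> (\<lambda>w. \<bar>F w\<bar> powr p)"
    and g_meas: "\<And>l. g l \<in> borel_measurable \<mu>"
    and g_cond: "\<And>l. AE w in \<mu>.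
        real_cond_exp \<mu> (vimage_algebra (space \<mu>) (U l) \<mu>) F w = g l (U l w)"
begin

lemma subalg: "subalgebra \<mu> (vimage_algebra (space \<mu>) (U l) \<mu>)"
proof -
  have "U l \<in> space \<mu> \<rightarrow> space \<mu>" using measurable_space[OF U_meas[of l]] by (simp add: Pi_iff)
  then have "sets (vimage_algebra (space \<mu>) (U l) \<mu>) = {U l -` A \<inter> space \<mu> |A. A \<in> sets \<mu>}"
    by (rule sets_vimage_algebra2)
  then show ?thesis unfolding subalgebra_def
    using measurable_sets[OF U_meas[of l]] by auto
qed

lemma sfs: "sigma_finite_subalgebra \<mu> (vimage_algebra (space \<mu>) (U l) \<mu>)"
  by (rule finite_measure_subalgebra_is_sigma_finite)
     (simp add: finite_measure_subalgebra_def finite_measure_subalgebra_axioms_def subalg finite_measure_axioms)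

lemma F_int: "integrable \<mu> F"
proof -
  have i: "integrable \<mu> (\<lambda>w. 1 + \<bar>F w\<bar> powr p)" by (intro Bochner_Integration.integrable_add integrable_const F_Lp)
  have "\<bar>F x\<bar> \<le> 1 + \<bar>F x\<bar> powr p" for x
  proof (cases "\<bar>F x\<bar> \<le> 1")
    case False
    then have "\<bar>F x\<bar> powr 1 \<le> \<bar>F x\<bar> powr p" using p_gt by (intro powr_mono) auto
    then show ?thesis using False by simp
  next
    case True
    then show ?thesis using powr_ge_zero[of "\<bar>F x\<bar>" p] by linarith
  qed
  then have "norm (F x) \<le> norm (1 + \<bar>F x\<bar> powr p)" for x
    using powr_ge_zero[of "\<bar>F x\<bar>" p] by simp
  then show ?thesis by (intro Bochner_Integration.integrable_bound[OF i F_meas] AE_I2)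
qed


lemma powr_add_bound: fixes a q :: real assumes "0 \<le> a" "1 < q"
  shows "(a + 1) powr q \<le> 2 powr q * (a powr q + 1)"
proof -
  have "a + 1 \<le> 2 * max a 1" by simp
  then have "(a + 1) powr q \<le> (2 * max a 1) powr q" using assms by (intro powr_mono2) auto
  also have "\<dots> = 2 powr q * max a 1 powr q" using assms by (simp add: powr_mult)
  also have "max a 1 powr q \<le> a powr q + 1"
    using powr_ge_zero[of a q] by (cases "a \<le> 1") (auto simp: max_def)
  then have "2 powr q * max a 1 powr q \<le> 2 powr q * (a powr q + 1)" by (intro mult_left_mono) auto
  finally show ?thesis .
qed

lemma gU_Lp: "integrable \<mu> (\<lambda>w. \<bar>g l (U l w)\<bar> powr p)"
proof -
  define V where "V = vimage_algebra (space \<mu>) (U l) \<mu>"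
  interpret V: sigma_finite_subalgebra \<mu> V unfolding V_def by (rule sfs)
  have [measurable]: "F \<in> borel_measurable \<mu>" by (rule F_meas)
  have iF1: "integrable \<mu> (\<lambda>w. \<bar>F w\<bar> + 1)" using F_int by (intro Bochner_Integration.integrable_add integrable_const) auto
  have iq: "integrable \<mu> (\<lambda>w. (\<bar>F w\<bar> + 1) powr p)"
  proof (rule Bochner_Integration.integrable_bound)
    show "integrable \<mu> (\<lambda>w. 2 powr p * (\<bar>F w\<bar> powr p + 1))"
      by (intro integrable_mult_right Bochner_Integration.integrable_add integrable_const F_Lp)
    show "(\<lambda>w. (\<bar>F w\<bar> + 1) powr p) \<in> borel_measurable \<mu>" by measurable
    show "AE x in \<mu>. norm ((\<bar>F x\<bar> + 1) powr p) \<le> norm (2 powr p * (\<bar>F x\<bar> powr p + 1))"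
      using powr_add_bound[OF _ p_gt] powr_ge_zero by (intro AE_I2) auto
  qed
  define C where "C = real_cond_exp \<mu> V (\<lambda>w. \<bar>F w\<bar> + 1)"
  have J: "AE w in \<mu>. C w \<in> {0<..}" "AE w in \<mu>. C w powr p \<le> real_cond_exp \<mu> V (\<lambda>w. (\<bar>F w\<bar> + 1) powr p) w"
    unfolding C_def
    by (rule V.real_cond_exp_jensens_inequality[OF iF1 _ _ iq powr_convex], (use p_gt in auto))+
  have m1: "AE w in \<mu>. real_cond_exp \<mu> V F w \<le> C w" unfolding C_def
    by (rule V.real_cond_exp_mono[OF _ F_int iF1]) auto
  have m2: "AE w in \<mu>. real_cond_exp \<mu> V (\<lambda>w. - F w) w \<le> C w" unfolding C_def
    by (rule V.real_cond_exp_mono[OF _ _ iF1]) (use F_int in auto)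
  have m3: "AE w in \<mu>. real_cond_exp \<mu> V (\<lambda>w. -1 * F w) w = -1 * real_cond_exp \<mu> V F w"
    by (rule V.real_cond_exp_cmult[OF F_int])
  have bd: "AE w in \<mu>. \<bar>g l (U l w)\<bar> powr p \<le> real_cond_exp \<mu> V (\<lambda>w. (\<bar>F w\<bar> + 1) powr p) w"
    using m1 m2 m3 J g_cond[of l]
  proof eventually_elim
    case (elim w)
    have "\<bar>g l (U l w)\<bar> \<le> C w" using elim unfolding V_def by auto
    then have "\<bar>g l (U l w)\<bar> powr p \<le> C w powr p" using p_gt by (intro powr_mono2) auto
    then show ?case using elim by linarith
  qed
  show ?thesis
  proof (rule Bochner_Integration.integrable_bound)
    show "integrable \<mu> (real_cond_exp \<mu> V (\<lambda>w. (\<bar>F w\<bar> + 1) powr p))"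
      by (rule V.real_cond_exp_int(1)[OF iq])
    have [measurable]: "g l \<in> borel_measurable \<mu>" "U l \<in> measurable \<mu> \<mu>" by (rule g_meas, rule U_meas)
    show "(\<lambda>w. \<bar>g l (U l w)\<bar> powr p) \<in> borel_measurable \<mu>" by measurable
    show "AE x in \<mu>. norm (\<bar>g l (U l x)\<bar> powr p) \<le> norm (real_cond_exp \<mu> V (\<lambda>w. (\<bar>F w\<bar> + 1) powr p) x)"
      using bd by eventually_elim auto
  qed
qed

lemma Lg_Lp: "integrable \<mu> (\<lambda>w. L l w * \<bar>g l w\<bar> powr p)"
proof -
  have [measurable]: "g l \<in> borel_measurable \<mu>" "U l \<in> measurable \<mu> \<mu>" "L l \<in> borel_measurable \<mu>"
    by (rule g_meas, rule U_meas, rule L_meas)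
  have "integrable (distr \<mu> \<mu> (U l)) (\<lambda>w. \<bar>g l w\<bar> powr p)"
    using gU_Lp[of l] by (subst integrable_distr_eq) auto
  then have "integrable (density \<mu> (\<lambda>w. ennreal (L l w))) (\<lambda>w. \<bar>g l w\<bar> powr p)"
    by (simp add: L_density)
  then show ?thesis using L_nonneg by (subst (asm) integrable_density) auto
qed

lemma part1:
  assumes "1 \<le> p'" "p' < p"
  shows "integrable \<mu> (\<lambda>w. \<bar>g l w\<bar> powr p')"
proof (rule Bochner_Integration.integrable_bound)
  let ?c = "p' / (p - p') + 1"
  show "integrable \<mu> (\<lambda>w. L l w * \<bar>g l w\<bar> powr (p' + (p - p')) + (1 + (1 / L l w) powr ?c))"
  proof (intro Bochner_Integration.integrable_add integrable_const)
    show "integrable \<mu> (\<lambda>w. L l w * \<bar>g l w\<bar> powr (p' + (p - p')))" using Lg_Lp by simp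
    have "integrable \<mu> (\<lambda>w. \<bar>1 / L l w\<bar> powr ?c)" using assms p_gt by (intro Linv_int) auto
    then show "integrable \<mu> (\<lambda>w. (1 / L l w) powr ?c)" using L_nonneg by simp
  qed
  have [measurable]: "g l \<in> borel_measurable \<mu>" by (rule g_meas)
  show "(\<lambda>w. \<bar>g l w\<bar> powr p') \<in> borel_measurable \<mu>" by measurable
  show "AE x in \<mu>. norm (\<bar>g l x\<bar> powr p') \<le> norm (L l x * \<bar>g l x\<bar> powr (p' + (p - p')) + (1 + (1 / L l x) powr ?c))"
    using L_pos[of l]
  proof eventually_elim
    case (elim w)
    have "\<bar>g l w\<bar> powr p' \<le> L l w * \<bar>g l w\<bar> powr (p' + (p - p')) + (1 + (1 / L l w) powr (p' / (p - p') + 1))"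
      using elim assms by (intro key_ineq) auto
    moreover have "0 \<le> L l w * \<bar>g l w\<bar> powr (p' + (p - p')) + (1 + (1 / L l w) powr ?c)"
      using elim by (intro add_nonneg_nonneg) auto
    ultimately show ?case by simp
  qed
qed
end



lemma scheffe_real:
  fixes Z :: "nat \<Rightarrow> 'a \<Rightarrow> real"
  assumes Zi: "\<And>n. integrable M (Z n)" and Zli: "integrable M Zl"
    and nn: "\<And>n. AE x in M. 0 \<le> Z n x"
    and lim: "AE x in M. (\<lambda>n. Z n x) \<longlonglongrightarrow> Zl x"
    and ilim: "(\<lambda>n. integral\<^sup>L M (Z n)) \<longlonglongrightarrow> integral\<^sup>L M Zl"
  shows "(\<lambda>n. \<integral>x. \<bar>Z n x - Zl x\<bar> \<partial>M) \<longlonglongrightarrow> 0"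
proof -
  have [measurable]: "Z n \<in> borel_measurable M" "Zl \<in> borel_measurable M" for n using Zi Zli by auto
  have nnl: "AE x in M. 0 \<le> Zl x"
  proof -
    have "AE x in M. \<forall>n. 0 \<le> Z n x" using nn by (simp add: AE_all_countable)
    then show ?thesis using lim
      by eventually_elim (rule LIMSEQ_le_const, auto)
  qed
  define P where "P n x = max 0 (Zl x - Z n x)" for n x
  have [measurable]: "P n \<in> borel_measurable M" for n unfolding P_def by measurable
  have Plim: "(\<lambda>n. integral\<^sup>L M (P n)) \<longlonglongrightarrow> integral\<^sup>L M (\<lambda>x. 0)"
  proof (rule integral_dominated_convergence[where w="Zl"])
    show "AE x in M. (\<lambda>n. P n x) \<longlonglongrightarrow> 0" using lim
    proof eventually_elim
      case (elim x)
      have "(\<lambda>n. max 0 (Zl x - Z n x)) \<longlonglongrightarrow> max 0 (Zl x - Zl x)"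
        by (intro tendsto_intros elim)
      then show ?case by (simp add: P_def)
    qed
    show "AE x in M. norm (P n x) \<le> Zl x" for n using nn[of n] nnl
      by eventually_elim (auto simp: P_def)
  qed (use Zli in auto)
  have Pi: "integrable M (P n)" for n
    by (rule Bochner_Integration.integrable_bound[OF Zli]) (use nn[of n] nnl in \<open>auto simp: P_def elim!: eventually_mono\<close>)
  have eq: "(\<integral>x. \<bar>Z n x - Zl x\<bar> \<partial>M) = integral\<^sup>L M (Z n) - integral\<^sup>L M Zl + 2 * integral\<^sup>L M (P n)" for n
  proof -
    have "(\<integral>x. \<bar>Z n x - Zl x\<bar> \<partial>M) = (\<integral>x. (Z n x - Zl x) + 2 * P n x \<partial>M)"
      by (intro Bochner_Integration.integral_cong) (auto simp: P_def max_def abs_if)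
    also have "\<dots> = integral\<^sup>L M (Z n) - integral\<^sup>L M Zl + 2 * integral\<^sup>L M (P n)"
      using Zi Zli Pi by simp
    finally show ?thesis .
  qed
  have "(\<lambda>n. integral\<^sup>L M (Z n) - integral\<^sup>L M Zl + 2 * integral\<^sup>L M (P n)) \<longlonglongrightarrow>
        integral\<^sup>L M Zl - integral\<^sup>L M Zl + 2 * 0"
    using Plim by (intro tendsto_intros ilim) auto
  then show ?thesis unfolding eq by simp
qed

lemma powr_tri: fixes a b Q :: real assumes "0 \<le> a" "0 \<le> b" "0 < Q"
  shows "a powr Q \<le> 2 powr Q * (\<bar>a - b\<bar> powr Q + b powr Q)"
proof -
  have "a \<le> 2 * max \<bar>a - b\<bar> b" using assms by (auto simp: max_def abs_if)
  then have "a powr Q \<le> (2 * max \<bar>a - b\<bar> b) powr Q" using assms by (intro powr_mono2) auto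
  also have "\<dots> = 2 powr Q * max \<bar>a - b\<bar> b powr Q" using assms by (simp add: powr_mult)
  also have "max \<bar>a - b\<bar> b powr Q \<le> \<bar>a - b\<bar> powr Q + b powr Q"
    by (auto simp: max_def)
  then have "2 powr Q * max \<bar>a - b\<bar> b powr Q \<le> 2 powr Q * (\<bar>a - b\<bar> powr Q + b powr Q)"
    by (intro mult_left_mono) auto
  finally show ?thesis .
qed

lemma powr_le_1_plus_gen: fixes x t Q :: real assumes "0 \<le> x" "0 < t" "t \<le> Q" shows "x powr t \<le> 1 + x powr Q"
proof (cases "x \<le> 1")
  case True
  then have "x powr t \<le> 1" using assms by (simp add: powr_le1)
  then show ?thesis using powr_ge_zero[of x Q] by linarith
next
  case False
  then have "x powr t \<le> x powr Q" using assms by (intro powr_mono) auto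
  then show ?thesis by linarith
qed

context S1 begin

lemma transfer:
  assumes [measurable]: "\<phi> \<in> borel_measurable \<mu>"
  shows "integrable \<mu> (\<lambda>w. \<phi> (U k w)) \<longleftrightarrow> integrable \<mu> (\<lambda>w. L k w * \<phi> w)"
    and "(\<integral>w. \<phi> (U k w) \<partial>\<mu>) = (\<integral>w. L k w * \<phi> w \<partial>\<mu>)"
proof -
  have [measurable]: "U k \<in> measurable \<mu> \<mu>" "L k \<in> borel_measurable \<mu>" by (rule U_meas, rule L_meas)
  show "integrable \<mu> (\<lambda>w. \<phi> (U k w)) \<longleftrightarrow> integrable \<mu> (\<lambda>w. L k w * \<phi> w)"
  proof -
    have "integrable \<mu> (\<lambda>w. \<phi> (U k w)) \<longleftrightarrow> integrable (distr \<mu> \<mu> (U k)) \<phi>"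
      by (rule integrable_distr_eq[symmetric]) measurable
    also have "\<dots> \<longleftrightarrow> integrable (density \<mu> (\<lambda>w. ennreal (L k w))) \<phi>" by (simp add: L_density)
    also have "\<dots> \<longleftrightarrow> integrable \<mu> (\<lambda>w. L k w *\<^sub>R \<phi> w)"
      by (rule integrable_density) (auto simp: L_nonneg)
    finally show ?thesis by simp
  qed
  have "(\<integral>w. \<phi> (U k w) \<partial>\<mu>) = integral\<^sup>L (distr \<mu> \<mu> (U k)) \<phi>" by (simp add: integral_distr)
  also have "\<dots> = (\<integral>w. L k w * \<phi> w \<partial>\<mu>)" by (simp add: L_density integral_density L_nonneg)
  finally show "(\<integral>w. \<phi> (U k w) \<partial>\<mu>) = (\<integral>w. L k w * \<phi> w \<partial>\<mu>)" .
qed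

end


lemma cont_seq: "continuous_on UNIV f \<Longrightarrow> k \<longlonglongrightarrow> l \<Longrightarrow> (\<lambda>n. f (k n)) \<longlonglongrightarrow> f l"
  for f :: "real \<Rightarrow> real"
  by (metis UNIV_I continuous_on_def continuous_within_tendsto_compose' open_UNIV
      continuous_on_eq_continuous_at continuous_at_imp_continuous_at_within)

locale S2 = S1 +
  assumes L_as_cont: "AE w in \<mu>. continuous_on UNIV (\<lambda>l. L l w)"
    and Linv_as_cont: "AE w in \<mu>. continuous_on UNIV (\<lambda>l. 1 / L l w)"
    and L1seq: "\<And>k l. k \<longlonglongrightarrow> l \<Longrightarrow> (\<lambda>n. \<integral>w. \<bar>L (k n) w - L l w\<bar> \<partial>\<mu>) \<longlonglongrightarrow> 0"
    and Linvseq: "\<And>q k l. 1 \<le> q \<Longrightarrow> k \<longlonglongrightarrow> l \<Longrightarrow> (\<lambda>n. \<integral>w. \<bar>1 / L (k n) w - 1 / L l w\<bar> powr q \<partial>\<mu>) \<longlonglongrightarrow> 0"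
    and L_int: "\<And>l. integrable \<mu> (L l)"
begin

lemma L_ae: "k \<longlonglongrightarrow> l \<Longrightarrow> AE w in \<mu>. (\<lambda>n. L (k n) w) \<longlonglongrightarrow> L l w"
  using L_as_cont by eventually_elim (rule cont_seq)

lemma Linv_ae: "k \<longlonglongrightarrow> l \<Longrightarrow> AE w in \<mu>. (\<lambda>n. 1 / L (k n) w) \<longlonglongrightarrow> 1 / L l w"
  using Linv_as_cont by eventually_elim (rule cont_seq[where f="\<lambda>l. 1 / L l w" for w])

lemma Lpos_all: "AE w in \<mu>. \<forall>n. 0 < L (k n) w" for k :: "nat \<Rightarrow> real"
  unfolding AE_all_countable using L_pos by blast

lemma Linv_pow_int: "1 \<le> Q \<Longrightarrow> integrable \<mu> (\<lambda>w. (1 / L l w) powr Q)"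
  using Linv_int[of Q l] L_nonneg by simp

lemma Linv_pow_L1:
  assumes Q: "1 \<le> Q" and kl: "k \<longlonglongrightarrow> l"
  shows "(\<lambda>n. \<integral>w. \<bar>(1 / L (k n) w) powr Q - (1 / L l w) powr Q\<bar> \<partial>\<mu>) \<longlonglongrightarrow> 0"
proof (rule vitali_V[where G="\<lambda>n w. 2 powr Q * (\<bar>1 / L (k n) w - 1 / L l w\<bar> powr Q + (1 / L l w) powr Q)"
      and Gl="\<lambda>w. 2 powr Q * (1 / L l w) powr Q"])
  have [measurable]: "L j \<in> borel_measurable \<mu>" for j by (rule L_meas)
  show "(\<lambda>w. (1 / L (k n) w) powr Q) \<in> borel_measurable \<mu>" for n by measurable
  show "(\<lambda>w. (1 / L l w) powr Q) \<in> borel_measurable \<mu>" by measurable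
  show "AE x in \<mu>. (\<lambda>n. (1 / L (k n) x) powr Q) \<longlonglongrightarrow> (1 / L l x) powr Q"
    using Linv_ae[OF kl] L_pos[of l]
  proof eventually_elim
    case (elim w)
    then show ?case by (intro tendsto_powr elim(1) tendsto_const) auto
  qed
  show "AE x in \<mu>. \<bar>(1 / L (k n) x) powr Q\<bar> \<le> 2 powr Q * (\<bar>1 / L (k n) x - 1 / L l x\<bar> powr Q + (1 / L l x) powr Q)" for n
    using Q by (intro AE_I2) (simp add: powr_tri L_nonneg)
  have i1: "integrable \<mu> (\<lambda>w. \<bar>1 / L (k n) w - 1 / L l w\<bar> powr Q)" for n
  proof (rule Bochner_Integration.integrable_bound[where f="\<lambda>w. 2 powr Q * ((1 / L (k n) w) powr Q + (1 / L l w) powr Q)"])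
    show "integrable \<mu> (\<lambda>w. 2 powr Q * ((1 / L (k n) w) powr Q + (1 / L l w) powr Q))"
      using Linv_pow_int[OF Q] by auto
    show "AE x in \<mu>. norm (\<bar>1 / L (k n) x - 1 / L l x\<bar> powr Q) \<le> norm (2 powr Q * ((1 / L (k n) x) powr Q + (1 / L l x) powr Q))"
    proof (intro AE_I2)
      fix x
      have "\<bar>1 / L (k n) x - 1 / L l x\<bar> powr Q \<le> 2 powr Q * (\<bar>\<bar>1 / L (k n) x - 1 / L l x\<bar> - 1 / L (k n) x\<bar> powr Q + (1 / L (k n) x) powr Q)"
        using Q by (intro powr_tri) (auto simp: L_nonneg)
      also have "\<bar>\<bar>1 / L (k n) x - 1 / L l x\<bar> - 1 / L (k n) x\<bar> \<le> 1 / L l x"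
        using L_nonneg[of "k n" x] L_nonneg[of l x] by (auto simp: abs_if)
      then have "\<bar>\<bar>1 / L (k n) x - 1 / L l x\<bar> - 1 / L (k n) x\<bar> powr Q \<le> (1 / L l x) powr Q"
        using Q by (intro powr_mono2) auto
      then have "2 powr Q * (\<bar>\<bar>1 / L (k n) x - 1 / L l x\<bar> - 1 / L (k n) x\<bar> powr Q + (1 / L (k n) x) powr Q)
          \<le> 2 powr Q * ((1 / L (k n) x) powr Q + (1 / L l x) powr Q)" by simp
      finally show "norm (\<bar>1 / L (k n) x - 1 / L l x\<bar> powr Q) \<le> norm (2 powr Q * ((1 / L (k n) x) powr Q + (1 / L l x) powr Q))"
        by (simp add: L_nonneg)
    qed
  qed measurable
  show "integrable \<mu> (\<lambda>w. 2 powr Q * (\<bar>1 / L (k n) w - 1 / L l w\<bar> powr Q + (1 / L l w) powr Q))" for n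
    using i1 Linv_pow_int[OF Q] by auto
  show "integrable \<mu> (\<lambda>w. 2 powr Q * (1 / L l w) powr Q)" using Linv_pow_int[OF Q] by auto
  have "(\<lambda>n. 2 powr Q * (\<integral>w. \<bar>1 / L (k n) w - 1 / L l w\<bar> powr Q \<partial>\<mu>)) \<longlonglongrightarrow> 2 powr Q * 0"
    by (intro tendsto_intros Linvseq Q kl)
  then show "(\<lambda>n. \<integral>w. \<bar>2 powr Q * (\<bar>1 / L (k n) w - 1 / L l w\<bar> powr Q + (1 / L l w) powr Q) - 2 powr Q * (1 / L l w) powr Q\<bar> \<partial>\<mu>) \<longlonglongrightarrow> 0"
    by (simp add: algebra_simps)
qed

end


lemma L1_int_conv:
  fixes f :: "nat \<Rightarrow> 'a \<Rightarrow> real"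
  assumes "\<And>n. integrable M (f n)" "integrable M fl" "(\<lambda>n. \<integral>x. \<bar>f n x - fl x\<bar> \<partial>M) \<longlonglongrightarrow> 0"
  shows "(\<lambda>n. integral\<^sup>L M (f n)) \<longlonglongrightarrow> integral\<^sup>L M fl"
proof -
  have e: "integral\<^sup>L M (f n) - integral\<^sup>L M fl = (\<integral>x. f n x - fl x \<partial>M)" for n using assms by simp
  have b: "\<bar>\<integral>x. f n x - fl x \<partial>M\<bar> \<le> (\<integral>x. \<bar>f n x - fl x\<bar> \<partial>M)" for n
    using integral_norm_bound[of M "\<lambda>x. f n x - fl x"] by simp
  have "(\<lambda>n. integral\<^sup>L M (f n) - integral\<^sup>L M fl) \<longlonglongrightarrow> 0"
  proof (rule tendsto_sandwich[where f="\<lambda>n. - (\<integral>x. \<bar>f n x - fl x\<bar> \<partial>M)" and h="\<lambda>n. \<integral>x. \<bar>f n x - fl x\<bar> \<partial>M"])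
    show "\<forall>\<^sub>F n in sequentially. - (\<integral>x. \<bar>f n x - fl x\<bar> \<partial>M) \<le> integral\<^sup>L M (f n) - integral\<^sup>L M fl"
    proof (intro always_eventually allI)
      fix n show "- (\<integral>x. \<bar>f n x - fl x\<bar> \<partial>M) \<le> integral\<^sup>L M (f n) - integral\<^sup>L M fl"
        using b[of n] unfolding e by linarith
    qed
    show "\<forall>\<^sub>F n in sequentially. integral\<^sup>L M (f n) - integral\<^sup>L M fl \<le> (\<integral>x. \<bar>f n x - fl x\<bar> \<partial>M)"
    proof (intro always_eventually allI)
      fix n show "integral\<^sup>L M (f n) - integral\<^sup>L M fl \<le> (\<integral>x. \<bar>f n x - fl x\<bar> \<partial>M)"
        using b[of n] unfolding e by linarith
    qed
    show "(\<lambda>n. - (\<integral>x. \<bar>f n x - fl x\<bar> \<partial>M)) \<longlonglongrightarrow> 0" using tendsto_minus[OF assms(3)] by simp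
  qed (use assms in auto)
  then show ?thesis by (simp add: LIM_zero_iff)
qed

lemma powr_div_id: fixes x b ps :: real assumes "0 \<le> x" "0 < b"
  shows "b * (x / b) powr ps = x powr ps * (1 / b) powr (ps - 1)"
proof -
  have "b * (x / b) powr ps = x powr ps * (b / b powr ps)" using assms by (simp add: powr_divide)
  also have "b / b powr ps = b powr (1 - ps)" using assms by (simp add: powr_diff)
  also have "\<dots> = 1 / b powr (ps - 1)" using powr_minus_divide[of b "ps - 1"] by simp
  also have "\<dots> = (1 / b) powr (ps - 1)" using assms by (simp add: powr_divide)
  finally show ?thesis .
qed

locale S3 = S2 +
  fixes h :: "'a \<Rightarrow> real" and D :: "'a \<Rightarrow> real" and K Q :: real
  assumes h_meas: "h \<in> borel_measurable \<mu>"
    and D_int: "integrable \<mu> D" and K: "0 \<le> K" and Q: "1 \<le> Q"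
    and hdom: "AE w in \<mu>. \<forall>x\<ge>0. \<bar>h w\<bar> powr (p / (p - 1)) * x powr (p / (p - 1) - 1) \<le> D w + K * (1 + x powr Q)"
    and subconv: "\<And>k l. k \<longlonglongrightarrow> l \<Longrightarrow> \<exists>r::nat\<Rightarrow>nat. strict_mono r \<and>
        (\<forall>f \<in> (borel_measurable \<mu> :: ('a \<Rightarrow> real) set). (\<lambda>n. \<integral>w. min 1 \<bar>f (U (k (r n)) w) - f (U l w)\<bar> \<partial>\<mu>) \<longlonglongrightarrow> 0)"
begin

abbreviation "ps \<equiv> p / (p - 1)"

definition Y :: "real \<Rightarrow> 'a \<Rightarrow> real" where "Y k w = h (U k w) / L k (U k w)"
definition W :: "real \<Rightarrow> 'a \<Rightarrow> real" where "W k w = \<bar>h w\<bar> powr ps * (1 / L k w) powr (ps - 1)"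

lemma ps_gt: "1 < ps" using p_gt by (simp add: field_simps)
lemma conj: "1 / p + 1 / ps = 1" using p_gt by (simp add: field_simps)

lemma meas[measurable]: "h \<in> borel_measurable \<mu>" "L k \<in> borel_measurable \<mu>" "U k \<in> measurable \<mu> \<mu>"
  "F \<in> borel_measurable \<mu>" "g k \<in> borel_measurable \<mu>"
  by (rule h_meas L_meas U_meas F_meas g_meas)+

lemma Y_meas[measurable]: "Y k \<in> borel_measurable \<mu>" unfolding Y_def by measurable
lemma W_meas[measurable]: "W k \<in> borel_measurable \<mu>" unfolding W_def by measurable

lemma W_dom: "AE w in \<mu>. W k w \<le> D w + K * (1 + (1 / L k w) powr Q)"
  using hdom by eventually_elim (auto simp: W_def L_nonneg)

lemma W_nonneg: "0 \<le> W k w" by (simp add: W_def)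

lemma W_int: "integrable \<mu> (W k)"
proof (rule Bochner_Integration.integrable_bound[where f="\<lambda>w. D w + K * (1 + (1 / L k w) powr Q)"])
  show "integrable \<mu> (\<lambda>w. D w + K * (1 + (1 / L k w) powr Q))"
    using D_int Linv_pow_int[OF Q] by auto
  show "AE x in \<mu>. norm (W k x) \<le> norm (D x + K * (1 + (1 / L k x) powr Q))"
    using W_dom[of k]
  proof eventually_elim
    case (elim x) then show ?case using W_nonneg[of k x] by (auto simp: abs_if)
  qed
qed simp

lemma Yp_eq: "AE w in \<mu>. L k w * \<bar>h w / L k w\<bar> powr ps = W k w"
  using L_pos[of k]
proof eventually_elim
  case (elim w)
  then have "L k w * (\<bar>h w\<bar> / L k w) powr ps = \<bar>h w\<bar> powr ps * (1 / L k w) powr (ps - 1)"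
    by (intro powr_div_id) auto
  then show ?case using elim by (simp add: W_def)
qed

lemma Yp_int: "integrable \<mu> (\<lambda>w. \<bar>Y k w\<bar> powr ps)"
proof -
  have "integrable \<mu> (\<lambda>w. L k w * \<bar>h w / L k w\<bar> powr ps)"
    using W_int[of k] Yp_eq[of k] by (subst integrable_cong_AE) auto
  then show ?thesis unfolding Y_def using transfer(1)[of "\<lambda>w. \<bar>h w / L k w\<bar> powr ps" k] by simp
qed

lemma Yp_integral: "(\<integral>w. \<bar>Y k w\<bar> powr ps \<partial>\<mu>) = integral\<^sup>L \<mu> (W k)"
proof -
  have "(\<integral>w. \<bar>Y k w\<bar> powr ps \<partial>\<mu>) = (\<integral>w. L k w * \<bar>h w / L k w\<bar> powr ps \<partial>\<mu>)"
    unfolding Y_def using transfer(2)[of "\<lambda>w. \<bar>h w / L k w\<bar> powr ps" k] by simp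
  also have "\<dots> = integral\<^sup>L \<mu> (W k)" using Yp_eq[of k] by (intro integral_cong_AE) auto
  finally show ?thesis .
qed

lemma young: "\<bar>a * b\<bar> \<le> \<bar>a\<bar> powr p / p + \<bar>b\<bar> powr ps / ps" for a b :: real
  using Youngs_inequality[of p ps "\<bar>a\<bar>" "\<bar>b\<bar>"] p_gt ps_gt conj by (simp add: abs_mult)

lemma FY_int: "integrable \<mu> (\<lambda>w. F w * Y k w)"
proof (rule Bochner_Integration.integrable_bound[where f="\<lambda>w. \<bar>F w\<bar> powr p / p + \<bar>Y k w\<bar> powr ps / ps"])
  show "integrable \<mu> (\<lambda>w. \<bar>F w\<bar> powr p / p + \<bar>Y k w\<bar> powr ps / ps)"
    using F_Lp Yp_int[of k] by auto
  show "AE x in \<mu>. norm (F x * Y k x) \<le> norm (\<bar>F x\<bar> powr p / p + \<bar>Y k x\<bar> powr ps / ps)"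
  proof (intro AE_I2)
    fix x
    have "0 \<le> \<bar>F x\<bar> powr p / p + \<bar>Y k x\<bar> powr ps / ps" using p_gt ps_gt by auto
    then show "norm (F x * Y k x) \<le> norm (\<bar>F x\<bar> powr p / p + \<bar>Y k x\<bar> powr ps / ps)"
      using young[of "F x" "Y k x"] by simp
  qed
qed simp

end


context S3 begin

lemma rep: "(\<integral>w. g k w * h w \<partial>\<mu>) = (\<integral>w. F w * Y k w \<partial>\<mu>)"
proof -
  define V where "V = vimage_algebra (space \<mu>) (U k) \<mu>"
  interpret V: sigma_finite_subalgebra \<mu> V unfolding V_def by (rule sfs)
  have Usp: "U k \<in> space \<mu> \<rightarrow> space \<mu>" using measurable_space[OF U_meas[of k]] by (simp add: Pi_iff)
  have UV: "U k \<in> measurable V \<mu>" unfolding V_def by (rule measurable_vimage_algebra1[OF Usp])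
  have hL: "(\<lambda>w. h w / L k w) \<in> borel_measurable \<mu>" by measurable
  have YV: "Y k \<in> borel_measurable V"
    using measurable_compose[OF UV hL] unfolding Y_def[abs_def] by simp
  have "(\<integral>w. g k w * h w \<partial>\<mu>) = (\<integral>w. L k w * (g k w * h w / L k w) \<partial>\<mu>)"
    using L_pos[of k] by (intro integral_cong_AE) (auto elim!: eventually_mono)
  also have "\<dots> = (\<integral>w. g k (U k w) * h (U k w) / L k (U k w) \<partial>\<mu>)"
    by (rule transfer(2)[symmetric]) measurable
  also have "\<dots> = (\<integral>w. real_cond_exp \<mu> V F w * Y k w \<partial>\<mu>)"
    using g_cond[of k] unfolding V_def
    by (intro integral_cong_AE) (auto simp: Y_def elim!: eventually_mono)
  also have "\<dots> = (\<integral>w. Y k w * real_cond_exp \<mu> V F w \<partial>\<mu>)" by (simp add: mult.commute)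
  also have "\<dots> = (\<integral>w. Y k w * F w \<partial>\<mu>)"
    by (rule V.real_cond_exp_intg(2)) (use FY_int[of k] YV in \<open>auto simp: mult.commute\<close>)
  finally show ?thesis by (simp add: mult.commute)
qed

lemma W_L1:
  assumes kl: "k \<longlonglongrightarrow> l"
  shows "(\<lambda>n. \<integral>w. \<bar>W (k n) w - W l w\<bar> \<partial>\<mu>) \<longlonglongrightarrow> 0"
proof (rule vitali_V[where G="\<lambda>n w. D w + K * (1 + (1 / L (k n) w) powr Q)" and Gl="\<lambda>w. D w + K * (1 + (1 / L l w) powr Q)"])
  show "AE x in \<mu>. (\<lambda>n. W (k n) x) \<longlonglongrightarrow> W l x"
    using Linv_ae[OF kl] L_pos[of l]
  proof eventually_elim
    case (elim w)
    have "(\<lambda>n. (1 / L (k n) w) powr (ps - 1)) \<longlonglongrightarrow> (1 / L l w) powr (ps - 1)"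
      using elim by (intro tendsto_powr elim(1) tendsto_const) auto
    then show ?case unfolding W_def by (intro tendsto_mult tendsto_const)
  qed
  show "AE x in \<mu>. \<bar>W (k n) x\<bar> \<le> D x + K * (1 + (1 / L (k n) x) powr Q)" for n
    using W_dom[of "k n"] by eventually_elim (simp add: W_nonneg)
  show "integrable \<mu> (\<lambda>w. D w + K * (1 + (1 / L (k n) w) powr Q))" for n
    using D_int Linv_pow_int[OF Q] by auto
  show "integrable \<mu> (\<lambda>w. D w + K * (1 + (1 / L l w) powr Q))"
    using D_int Linv_pow_int[OF Q] by auto
  have "(\<lambda>n. K * (\<integral>w. \<bar>(1 / L (k n) w) powr Q - (1 / L l w) powr Q\<bar> \<partial>\<mu>)) \<longlonglongrightarrow> K * 0"
    by (intro tendsto_intros Linv_pow_L1[OF Q kl])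
  moreover have "(\<integral>w. \<bar>D w + K * (1 + (1 / L (k n) w) powr Q) - (D w + K * (1 + (1 / L l w) powr Q))\<bar> \<partial>\<mu>)
      = K * (\<integral>w. \<bar>(1 / L (k n) w) powr Q - (1 / L l w) powr Q\<bar> \<partial>\<mu>)" for n
  proof -
    have "(\<integral>w. \<bar>D w + K * (1 + (1 / L (k n) w) powr Q) - (D w + K * (1 + (1 / L l w) powr Q))\<bar> \<partial>\<mu>)
      = (\<integral>w. K * \<bar>(1 / L (k n) w) powr Q - (1 / L l w) powr Q\<bar> \<partial>\<mu>)"
    proof (intro Bochner_Integration.integral_cong refl)
      fix w
      have "D w + K * (1 + (1 / L (k n) w) powr Q) - (D w + K * (1 + (1 / L l w) powr Q))
          = K * ((1 / L (k n) w) powr Q - (1 / L l w) powr Q)" by (simp add: algebra_simps)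
      then show "\<bar>D w + K * (1 + (1 / L (k n) w) powr Q) - (D w + K * (1 + (1 / L l w) powr Q))\<bar>
          = K * \<bar>(1 / L (k n) w) powr Q - (1 / L l w) powr Q\<bar>" using K by (simp add: abs_mult)
    qed
    then show ?thesis by simp
  qed
  ultimately show "(\<lambda>n. \<integral>w. \<bar>D w + K * (1 + (1 / L (k n) w) powr Q) - (D w + K * (1 + (1 / L l w) powr Q))\<bar> \<partial>\<mu>) \<longlonglongrightarrow> 0"
    by simp
qed measurable

end


lemma min1_tendsto: fixes a :: "nat \<Rightarrow> real"
  assumes "(\<lambda>n. min 1 \<bar>a n\<bar>) \<longlonglongrightarrow> 0" shows "a \<longlonglongrightarrow> 0"
proof -
  have "eventually (\<lambda>n. min 1 \<bar>a n\<bar> < 1) sequentially"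
    using assms by (rule order_tendstoD) simp
  then have "eventually (\<lambda>n. min 1 \<bar>a n\<bar> = \<bar>a n\<bar>) sequentially"
    by eventually_elim (auto simp: min_def)
  then have "(\<lambda>n. \<bar>a n\<bar>) \<longlonglongrightarrow> 0" using assms by (rule Lim_transform_eventually[rotated]) 
  then show ?thesis by (simp add: tendsto_rabs_zero_iff)
qed

lemma squeeze0: fixes a s :: "nat \<Rightarrow> real"
  assumes "s \<longlonglongrightarrow> 0" "\<And>n. 0 \<le> a n" "\<And>n. a n \<le> s n" shows "a \<longlonglongrightarrow> 0"
  by (rule tendsto_sandwich[where f="\<lambda>n. 0" and h=s]) (use assms in auto)

context S3 begin

lemma min_int: fixes f :: "'a \<Rightarrow> real" assumes [measurable]: "f \<in> borel_measurable \<mu>" shows "integrable \<mu> (\<lambda>w. min 1 \<bar>f w\<bar>)"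
proof -
  have i: "integrable \<mu> (\<lambda>w. 1::real)" by simp
  show ?thesis by (rule Bochner_Integration.integrable_bound[OF i]) auto
qed

lemma third_term:
  assumes kl: "k \<longlonglongrightarrow> l"
  shows "(\<lambda>n. \<integral>w. min 1 \<bar>1 / L (k n) (U (k n) w) - 1 / L l (U (k n) w)\<bar> \<partial>\<mu>) \<longlonglongrightarrow> 0"
proof -
  have eq: "(\<integral>w. min 1 \<bar>1 / L (k n) (U (k n) w) - 1 / L l (U (k n) w)\<bar> \<partial>\<mu>)
      = (\<integral>w. \<bar>L (k n) w * min 1 \<bar>1 / L (k n) w - 1 / L l w\<bar> - 0\<bar> \<partial>\<mu>)" for n
  proof -
    have "(\<integral>w. min 1 \<bar>1 / L (k n) (U (k n) w) - 1 / L l (U (k n) w)\<bar> \<partial>\<mu>)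
        = (\<integral>w. L (k n) w * min 1 \<bar>1 / L (k n) w - 1 / L l w\<bar> \<partial>\<mu>)"
      by (rule transfer(2)) measurable
    also have "\<dots> = (\<integral>w. \<bar>L (k n) w * min 1 \<bar>1 / L (k n) w - 1 / L l w\<bar> - 0\<bar> \<partial>\<mu>)"
      by (intro Bochner_Integration.integral_cong refl) (simp add: L_nonneg abs_mult)
    finally show ?thesis .
  qed
  have "(\<lambda>n. \<integral>w. \<bar>L (k n) w * min 1 \<bar>1 / L (k n) w - 1 / L l w\<bar> - 0\<bar> \<partial>\<mu>) \<longlonglongrightarrow> 0"
  proof (rule vitali_V[where G="\<lambda>n. L (k n)" and Gl="L l"])
    show "AE x in \<mu>. (\<lambda>n. L (k n) x * min 1 \<bar>1 / L (k n) x - 1 / L l x\<bar>) \<longlonglongrightarrow> 0"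
      using L_ae[OF kl] Linv_ae[OF kl]
    proof eventually_elim
      case (elim w)
      have "(\<lambda>n. L (k n) w * min 1 \<bar>1 / L (k n) w - 1 / L l w\<bar>) \<longlonglongrightarrow> L l w * min 1 \<bar>1 / L l w - 1 / L l w\<bar>"
        by (intro tendsto_intros elim)
      then show ?case by simp
    qed
    show "AE x in \<mu>. \<bar>L (k n) x * min 1 \<bar>1 / L (k n) x - 1 / L l x\<bar>\<bar> \<le> L (k n) x" for n
    proof (intro AE_I2)
      fix x
      have "L (k n) x * min 1 \<bar>1 / L (k n) x - 1 / L l x\<bar> \<le> L (k n) x * 1"
        by (intro mult_left_mono) (auto simp: L_nonneg)
      then show "\<bar>L (k n) x * min 1 \<bar>1 / L (k n) x - 1 / L l x\<bar>\<bar> \<le> L (k n) x" by (simp add: L_nonneg abs_mult)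
    qed
    show "(\<lambda>n. \<integral>w. \<bar>L (k n) w - L l w\<bar> \<partial>\<mu>) \<longlonglongrightarrow> 0" by (rule L1seq[OF kl])
  qed (auto simp: L_int)
  then show ?thesis unfolding eq .
qed

end


context S3 begin

lemma main_cont: "continuous_on UNIV (\<lambda>l. \<integral>w. g l w * h w \<partial>\<mu>)"
proof (rule cont_by_subseq)
  fix l and k :: "nat \<Rightarrow> real" assume kl: "k \<longlonglongrightarrow> l"
  obtain r1 :: "nat \<Rightarrow> nat" where r1: "strict_mono r1" and conv:
    "\<And>f :: 'a \<Rightarrow> real. f \<in> borel_measurable \<mu> \<Longrightarrow> (\<lambda>n. \<integral>w. min 1 \<bar>f (U (k (r1 n)) w) - f (U l w)\<bar> \<partial>\<mu>) \<longlonglongrightarrow> 0"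
    using subconv[OF kl] by blast
  define k1 where "k1 n = k (r1 n)" for n
  have k1l: "k1 \<longlonglongrightarrow> l" unfolding k1_def using LIMSEQ_subseq_LIMSEQ[OF kl r1] by (simp add: o_def)
  define S where "S n w = min 1 \<bar>h (U (k1 n) w) - h (U l w)\<bar>
     + min 1 \<bar>1 / L l (U (k1 n) w) - 1 / L l (U l w)\<bar>
     + min 1 \<bar>1 / L (k1 n) (U (k1 n) w) - 1 / L l (U (k1 n) w)\<bar>" for n w
  have S_meas[measurable]: "S n \<in> borel_measurable \<mu>" for n unfolding S_def by measurable
  have S_nn: "0 \<le> S n w" for n w unfolding S_def by simp
  have c1: "(\<lambda>n. \<integral>w. min 1 \<bar>h (U (k1 n) w) - h (U l w)\<bar> \<partial>\<mu>) \<longlonglongrightarrow> 0"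
    unfolding k1_def by (rule conv) measurable
  have c2: "(\<lambda>n. \<integral>w. min 1 \<bar>1 / L l (U (k1 n) w) - 1 / L l (U l w)\<bar> \<partial>\<mu>) \<longlonglongrightarrow> 0"
    unfolding k1_def by (rule conv[of "\<lambda>w. 1 / L l w", simplified]) measurable
  have c3: "(\<lambda>n. \<integral>w. min 1 \<bar>1 / L (k1 n) (U (k1 n) w) - 1 / L l (U (k1 n) w)\<bar> \<partial>\<mu>) \<longlonglongrightarrow> 0"
    by (rule third_term[OF k1l])
  have Sint: "integral\<^sup>L \<mu> (S n) = (\<integral>w. min 1 \<bar>h (U (k1 n) w) - h (U l w)\<bar> \<partial>\<mu>)
      + (\<integral>w. min 1 \<bar>1 / L l (U (k1 n) w) - 1 / L l (U l w)\<bar> \<partial>\<mu>)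
      + (\<integral>w. min 1 \<bar>1 / L (k1 n) (U (k1 n) w) - 1 / L l (U (k1 n) w)\<bar> \<partial>\<mu>)" for n
    unfolding S_def
    by (subst Bochner_Integration.integral_add, (intro Bochner_Integration.integrable_add min_int; measurable),
        (intro min_int; measurable), subst Bochner_Integration.integral_add, (intro min_int; measurable)+, simp)
  have SL1: "(\<lambda>n. \<integral>w. norm (S n w) \<partial>\<mu>) \<longlonglongrightarrow> 0"
    using tendsto_add[OF tendsto_add[OF c1 c2] c3] by (simp add: S_nn Sint)
  have Sint2: "integrable \<mu> (S n)" for n
    unfolding S_def by (intro Bochner_Integration.integrable_add min_int; measurable)
  obtain r2 :: "nat \<Rightarrow> nat" where r2: "strict_mono r2" and Sae: "AE w in \<mu>. (\<lambda>n. S (r2 n) w) \<longlonglongrightarrow> 0"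
    using tendsto_L1_AE_subseq[OF Sint2 SL1] by blast
  define k2 where "k2 n = k1 (r2 n)" for n
  have k2l: "k2 \<longlonglongrightarrow> l" unfolding k2_def using LIMSEQ_subseq_LIMSEQ[OF k1l r2] by (simp add: o_def)
  have Yae: "AE w in \<mu>. (\<lambda>n. Y (k2 n) w) \<longlonglongrightarrow> Y l w"
    using Sae
  proof eventually_elim
    case (elim w)
    have a1: "(\<lambda>n. h (U (k2 n) w) - h (U l w)) \<longlonglongrightarrow> 0"
      by (rule min1_tendsto, rule squeeze0[OF elim]) (auto simp: S_def k2_def)
    have a2: "(\<lambda>n. 1 / L l (U (k2 n) w) - 1 / L l (U l w)) \<longlonglongrightarrow> 0"
      by (rule min1_tendsto, rule squeeze0[OF elim]) (auto simp: S_def k2_def)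
    have a3: "(\<lambda>n. 1 / L (k2 n) (U (k2 n) w) - 1 / L l (U (k2 n) w)) \<longlonglongrightarrow> 0"
      by (rule min1_tendsto, rule squeeze0[OF elim]) (auto simp: S_def k2_def)
    have b1: "(\<lambda>n. h (U (k2 n) w)) \<longlonglongrightarrow> h (U l w)"
      using a1 by (simp add: LIM_zero_iff)
    have b2: "(\<lambda>n. 1 / L (k2 n) (U (k2 n) w)) \<longlonglongrightarrow> 1 / L l (U l w)"
    proof -
      have "(\<lambda>n. (1 / L (k2 n) (U (k2 n) w) - 1 / L l (U (k2 n) w)) + ((1 / L l (U (k2 n) w) - 1 / L l (U l w)) + 1 / L l (U l w)))
          \<longlonglongrightarrow> 0 + (0 + 1 / L l (U l w))"
        by (intro tendsto_add a2 a3 tendsto_const)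
      then show ?thesis by simp
    qed
    have "(\<lambda>n. h (U (k2 n) w) * (1 / L (k2 n) (U (k2 n) w))) \<longlonglongrightarrow> h (U l w) * (1 / L l (U l w))"
      by (intro tendsto_mult b1 b2)
    then show ?case by (simp add: Y_def)
  qed
  have Ypae: "AE w in \<mu>. (\<lambda>n. \<bar>Y (k2 n) w\<bar> powr ps) \<longlonglongrightarrow> \<bar>Y l w\<bar> powr ps"
    using Yae
  proof eventually_elim
    case (elim w)
    show ?case by (rule tendsto_powr') (use ps_gt in \<open>auto intro!: tendsto_intros elim\<close>)
  qed
  have Ypint: "(\<lambda>n. \<integral>w. \<bar>Y (k2 n) w\<bar> powr ps \<partial>\<mu>) \<longlonglongrightarrow> (\<integral>w. \<bar>Y l w\<bar> powr ps \<partial>\<mu>)"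
    unfolding Yp_integral by (rule L1_int_conv[OF W_int W_int W_L1[OF k2l]])
  have YpL1: "(\<lambda>n. \<integral>w. \<bar>\<bar>Y (k2 n) w\<bar> powr ps - \<bar>Y l w\<bar> powr ps\<bar> \<partial>\<mu>) \<longlonglongrightarrow> 0"
    by (rule scheffe_real[OF Yp_int Yp_int _ Ypae Ypint]) simp
  have FYL1: "(\<lambda>n. \<integral>w. \<bar>F w * Y (k2 n) w - F w * Y l w\<bar> \<partial>\<mu>) \<longlonglongrightarrow> 0"
  proof (rule vitali_V[where G="\<lambda>n w. \<bar>F w\<bar> powr p / p + \<bar>Y (k2 n) w\<bar> powr ps / ps"
        and Gl="\<lambda>w. \<bar>F w\<bar> powr p / p + \<bar>Y l w\<bar> powr ps / ps"])
    show "AE x in \<mu>. (\<lambda>n. F x * Y (k2 n) x) \<longlonglongrightarrow> F x * Y l x"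
      using Yae by eventually_elim (intro tendsto_mult tendsto_const)
    show "AE x in \<mu>. \<bar>F x * Y (k2 n) x\<bar> \<le> \<bar>F x\<bar> powr p / p + \<bar>Y (k2 n) x\<bar> powr ps / ps" for n
      by (intro AE_I2 young)
    show "integrable \<mu> (\<lambda>w. \<bar>F w\<bar> powr p / p + \<bar>Y (k2 n) w\<bar> powr ps / ps)" for n
      using F_Lp Yp_int by auto
    show "integrable \<mu> (\<lambda>w. \<bar>F w\<bar> powr p / p + \<bar>Y l w\<bar> powr ps / ps)"
      using F_Lp Yp_int by auto
    have "(\<lambda>n. (\<integral>w. \<bar>\<bar>Y (k2 n) w\<bar> powr ps - \<bar>Y l w\<bar> powr ps\<bar> \<partial>\<mu>) / ps) \<longlonglongrightarrow> 0 / ps"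
      by (intro tendsto_divide YpL1 tendsto_const) (use ps_gt in auto)
    moreover have "(\<integral>w. \<bar>\<bar>F w\<bar> powr p / p + \<bar>Y (k2 n) w\<bar> powr ps / ps - (\<bar>F w\<bar> powr p / p + \<bar>Y l w\<bar> powr ps / ps)\<bar> \<partial>\<mu>)
        = (\<integral>w. \<bar>\<bar>Y (k2 n) w\<bar> powr ps - \<bar>Y l w\<bar> powr ps\<bar> \<partial>\<mu>) / ps" for n
    proof -
      have "(\<integral>w. \<bar>\<bar>F w\<bar> powr p / p + \<bar>Y (k2 n) w\<bar> powr ps / ps - (\<bar>F w\<bar> powr p / p + \<bar>Y l w\<bar> powr ps / ps)\<bar> \<partial>\<mu>)
        = (\<integral>w. \<bar>\<bar>Y (k2 n) w\<bar> powr ps - \<bar>Y l w\<bar> powr ps\<bar> / ps \<partial>\<mu>)"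
      proof (intro Bochner_Integration.integral_cong refl)
        fix w
        have "\<bar>F w\<bar> powr p / p + \<bar>Y (k2 n) w\<bar> powr ps / ps - (\<bar>F w\<bar> powr p / p + \<bar>Y l w\<bar> powr ps / ps)
          = (\<bar>Y (k2 n) w\<bar> powr ps - \<bar>Y l w\<bar> powr ps) / ps" by (simp add: diff_divide_distrib left_diff_distrib)
        then show "\<bar>\<bar>F w\<bar> powr p / p + \<bar>Y (k2 n) w\<bar> powr ps / ps - (\<bar>F w\<bar> powr p / p + \<bar>Y l w\<bar> powr ps / ps)\<bar>
          = \<bar>\<bar>Y (k2 n) w\<bar> powr ps - \<bar>Y l w\<bar> powr ps\<bar> / ps" using ps_gt p_gt by (simp add: abs_mult)
      qed
      then show ?thesis by simp
    qed
    ultimately show "(\<lambda>n. \<integral>w. \<bar>\<bar>F w\<bar> powr p / p + \<bar>Y (k2 n) w\<bar> powr ps / ps - (\<bar>F w\<bar> powr p / p + \<bar>Y l w\<bar> powr ps / ps)\<bar> \<partial>\<mu>) \<longlonglongrightarrow> 0"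
      by simp
  qed measurable
  have "(\<lambda>n. \<integral>w. F w * Y (k2 n) w \<partial>\<mu>) \<longlonglongrightarrow> (\<integral>w. F w * Y l w \<partial>\<mu>)"
    by (rule L1_int_conv[OF FY_int FY_int FYL1])
  then have "(\<lambda>n. \<integral>w. g (k ((r1 \<circ> r2) n)) w * h w \<partial>\<mu>) \<longlonglongrightarrow> (\<integral>w. g l w * h w \<partial>\<mu>)"
    by (simp add: rep k2_def k1_def)
  moreover have "strict_mono (r1 \<circ> r2)" using r1 r2 by (rule strict_mono_o)
  ultimately show "\<exists>r::nat\<Rightarrow>nat. strict_mono r \<and> (\<lambda>n. \<integral>w. g (k (r n)) w * h w \<partial>\<mu>) \<longlonglongrightarrow> (\<integral>w. g l w * h w \<partial>\<mu>)"
    by blast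
qed

end


lemma tendsto0_eps: fixes x :: "nat \<Rightarrow> real"
  assumes "\<And>e. 0 < e \<Longrightarrow> eventually (\<lambda>n. x n \<le> e) sequentially" "\<And>n. 0 \<le> x n"
  shows "x \<longlonglongrightarrow> 0"
proof (rule order_tendstoI)
  fix a :: real assume a: "a < 0"
  show "eventually (\<lambda>n. a < x n) sequentially"
  proof (intro always_eventually allI)
    fix n show "a < x n" using assms(2)[of n] a by linarith
  qed
next
  fix a :: real assume "0 < a"
  then have "eventually (\<lambda>n. x n \<le> a / 2) sequentially" using assms(1)[of "a/2"] by simp
  then show "eventually (\<lambda>n. x n < a) sequentially" by eventually_elim (use \<open>0 < a\<close> in auto)
qed

locale PCgen = prob_space \<mu> for \<mu> :: "'a measure" +
  fixes Vn :: "nat \<Rightarrow> 'a \<Rightarrow> 'a" and Vl :: "'a \<Rightarrow> 'a" and Ln :: "nat \<Rightarrow> 'a \<Rightarrow> real" and Ll :: "'a \<Rightarrow> real"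
  assumes Vn_meas[measurable]: "\<And>n. Vn n \<in> measurable \<mu> \<mu>" and Vl_meas[measurable]: "Vl \<in> measurable \<mu> \<mu>"
    and Ln_meas[measurable]: "\<And>n. Ln n \<in> borel_measurable \<mu>" and Ll_meas[measurable]: "Ll \<in> borel_measurable \<mu>"
    and Ln_nn: "\<And>n w. 0 \<le> Ln n w" and Ll_nn: "\<And>w. 0 \<le> Ll w"
    and Ln_dens: "\<And>n. distr \<mu> \<mu> (Vn n) = density \<mu> (\<lambda>w. ennreal (Ln n w))"
    and Ll_dens: "distr \<mu> \<mu> Vl = density \<mu> (\<lambda>w. ennreal (Ll w))"
    and Ln_int: "\<And>n. integrable \<mu> (Ln n)" and Ll_int: "integrable \<mu> Ll"
    and L1conv: "(\<lambda>n. \<integral>w. \<bar>Ln n w - Ll w\<bar> \<partial>\<mu>) \<longlonglongrightarrow> 0"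
begin

lemma trans_n: assumes [measurable]: "\<phi> \<in> borel_measurable \<mu>"
  shows "(\<integral>w. \<phi> (Vn n w) \<partial>\<mu>) = (\<integral>w. Ln n w * \<phi> w \<partial>\<mu>)"
proof -
  have "(\<integral>w. \<phi> (Vn n w) \<partial>\<mu>) = integral\<^sup>L (distr \<mu> \<mu> (Vn n)) \<phi>" by (simp add: integral_distr)
  also have "\<dots> = (\<integral>w. Ln n w * \<phi> w \<partial>\<mu>)" by (simp add: Ln_dens integral_density Ln_nn)
  finally show ?thesis .
qed

lemma trans_l: assumes [measurable]: "\<phi> \<in> borel_measurable \<mu>"
  shows "(\<integral>w. \<phi> (Vl w) \<partial>\<mu>) = (\<integral>w. Ll w * \<phi> w \<partial>\<mu>)"
proof -
  have "(\<integral>w. \<phi> (Vl w) \<partial>\<mu>) = integral\<^sup>L (distr \<mu> \<mu> Vl) \<phi>" by (simp add: integral_distr)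
  also have "\<dots> = (\<integral>w. Ll w * \<phi> w \<partial>\<mu>)" by (simp add: Ll_dens integral_density Ll_nn)
  finally show ?thesis .
qed

lemma bdd_int: fixes \<phi> :: "'a \<Rightarrow> real" assumes [measurable]: "\<phi> \<in> borel_measurable \<mu>" and b: "\<And>w. \<bar>\<phi> w\<bar> \<le> C"
  shows "integrable \<mu> \<phi>"
proof -
  have i: "integrable \<mu> (\<lambda>w. C)" by simp
  show ?thesis by (rule Bochner_Integration.integrable_bound[OF i]) (use b in \<open>auto intro!: AE_I2 order_trans[OF _ abs_ge_self]\<close>)
qed

lemma Lmul_int: fixes \<phi> :: "'a \<Rightarrow> real" assumes [measurable]: "\<phi> \<in> borel_measurable \<mu>" and b: "\<And>w. \<bar>\<phi> w\<bar> \<le> 1"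
  shows "integrable \<mu> (\<lambda>w. Ln n w * \<phi> w)" "integrable \<mu> (\<lambda>w. Ll w * \<phi> w)"
proof -
  show "integrable \<mu> (\<lambda>w. Ln n w * \<phi> w)"
  proof (rule Bochner_Integration.integrable_bound[OF Ln_int[of n]])
    show "AE x in \<mu>. norm (Ln n x * \<phi> x) \<le> norm (Ln n x)"
      using b by (intro AE_I2) (simp add: abs_mult Ln_nn mult_left_le)
  qed measurable
  show "integrable \<mu> (\<lambda>w. Ll w * \<phi> w)"
  proof (rule Bochner_Integration.integrable_bound[OF Ll_int])
    show "AE x in \<mu>. norm (Ll x * \<phi> x) \<le> norm (Ll x)"
      using b by (intro AE_I2) (simp add: abs_mult Ll_nn mult_left_le)
  qed measurable
qed

lemma dens_diff: fixes \<phi> :: "'a \<Rightarrow> real" assumes [measurable]: "\<phi> \<in> borel_measurable \<mu>" and b: "\<And>w. \<bar>\<phi> w\<bar> \<le> 1"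
  shows "\<bar>(\<integral>w. Ln n w * \<phi> w \<partial>\<mu>) - (\<integral>w. Ll w * \<phi> w \<partial>\<mu>)\<bar> \<le> (\<integral>w. \<bar>Ln n w - Ll w\<bar> \<partial>\<mu>)"
proof -
  have "(\<integral>w. Ln n w * \<phi> w \<partial>\<mu>) - (\<integral>w. Ll w * \<phi> w \<partial>\<mu>) = (\<integral>w. (Ln n w - Ll w) * \<phi> w \<partial>\<mu>)"
    using Lmul_int[OF assms] by (simp add: left_diff_distrib)
  also have "\<bar>\<dots>\<bar> \<le> (\<integral>w. norm ((Ln n w - Ll w) * \<phi> w) \<partial>\<mu>)"
    using integral_norm_bound[of \<mu> "\<lambda>w. (Ln n w - Ll w) * \<phi> w"] by simp
  also have "\<dots> \<le> (\<integral>w. \<bar>Ln n w - Ll w\<bar> \<partial>\<mu>)"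
  proof (rule integral_mono)
    show "integrable \<mu> (\<lambda>w. norm ((Ln n w - Ll w) * \<phi> w))"
      using Lmul_int[OF assms] by (auto simp: left_diff_distrib)
    show "integrable \<mu> (\<lambda>w. \<bar>Ln n w - Ll w\<bar>)" using Ln_int Ll_int by auto
    show "norm ((Ln n w - Ll w) * \<phi> w) \<le> \<bar>Ln n w - Ll w\<bar>" for w
      using b[of w] by (simp add: abs_mult mult_left_le)
  qed
  finally show ?thesis .
qed

definition dd :: "nat \<Rightarrow> 'a set \<Rightarrow> real" where
  "dd n A = (\<integral>w. \<bar>indicator A (Vn n w) - indicator A (Vl w)\<bar> \<partial>\<mu>)"

lemma dd_nn: "0 \<le> dd n A" unfolding dd_def by simp


lemma Vn_space: "w \<in> space \<mu> \<Longrightarrow> Vn n w \<in> space \<mu>" using measurable_space[OF Vn_meas] .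
lemma Vl_space: "w \<in> space \<mu> \<Longrightarrow> Vl w \<in> space \<mu>" using measurable_space[OF Vl_meas] .

lemma ind_int_n: "A \<in> sets \<mu> \<Longrightarrow> (\<integral>w. indicator A (Vn n w) \<partial>\<mu>) = (\<integral>w. Ln n w * indicator A w \<partial>\<mu>)"
  by (intro trans_n borel_measurable_indicator)
lemma ind_int_l: "A \<in> sets \<mu> \<Longrightarrow> (\<integral>w. indicator A (Vl w) \<partial>\<mu>) = (\<integral>w. Ll w * indicator A w \<partial>\<mu>)"
  by (intro trans_l borel_measurable_indicator)

lemma ind_conv: assumes A[measurable]: "A \<in> sets \<mu>"
  shows "(\<lambda>n. \<integral>w. Ln n w * indicator A w \<partial>\<mu>) \<longlonglongrightarrow> (\<integral>w. Ll w * indicator A w \<partial>\<mu>)"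
proof -
  have "(\<lambda>n. (\<integral>w. Ln n w * indicator A w \<partial>\<mu>) - (\<integral>w. Ll w * indicator A w \<partial>\<mu>)) \<longlonglongrightarrow> 0"
  proof (rule tendsto_rabs_zero_cancel, rule squeeze0[OF L1conv])
    show "\<bar>(\<integral>w. Ln n w * indicator A w \<partial>\<mu>) - (\<integral>w. Ll w * indicator A w \<partial>\<mu>)\<bar> \<le> (\<integral>w. \<bar>Ln n w - Ll w\<bar> \<partial>\<mu>)" for n
      by (rule dens_diff) auto
  qed auto
  then show ?thesis by (simp add: LIM_zero_iff)
qed

lemma dd_basic:
  assumes A[measurable]: "A \<in> sets \<mu>"
    and op: "AE w in \<mu>. Vl w \<in> A \<longrightarrow> eventually (\<lambda>n. Vn n w \<in> A) sequentially"
  shows "(\<lambda>n. dd n A) \<longlonglongrightarrow> 0"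
proof -
  define b where "b = (\<integral>w. indicator A (Vl w) \<partial>\<mu> :: real)"
  have ind_i: "integrable \<mu> (\<lambda>w. indicator A (Vn n w) :: real)" "integrable \<mu> (\<lambda>w. indicator A (Vl w) :: real)"
    "integrable \<mu> (\<lambda>w. indicator A (Vn n w) * indicator A (Vl w) :: real)" for n
  proof -
    have b1: "\<bar>indicator A x :: real\<bar> \<le> 1" for x by (simp split: split_indicator)
    have b2: "\<bar>indicator A x * indicator A y :: real\<bar> \<le> 1" for x y by (simp split: split_indicator)
    show "integrable \<mu> (\<lambda>w. indicator A (Vn n w) :: real)" by (rule bdd_int[OF _ b1]) measurable
    show "integrable \<mu> (\<lambda>w. indicator A (Vl w) :: real)" by (rule bdd_int[OF _ b1]) measurable
    show "integrable \<mu> (\<lambda>w. indicator A (Vn n w) * indicator A (Vl w) :: real)" by (rule bdd_int[OF _ b2]) measurable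
  qed
  have a: "(\<lambda>n. \<integral>w. indicator A (Vn n w) \<partial>\<mu>) \<longlonglongrightarrow> b"
    unfolding b_def ind_int_n[OF A] ind_int_l[OF A] by (rule ind_conv[OF A])
  have c: "(\<lambda>n. \<integral>w. indicator A (Vn n w) * indicator A (Vl w) \<partial>\<mu>) \<longlonglongrightarrow> b"
    unfolding b_def
  proof (rule integral_dominated_convergence[where w="\<lambda>w. 1"])
    show "AE w in \<mu>. (\<lambda>n. indicator A (Vn n w) * indicator A (Vl w) :: real) \<longlonglongrightarrow> indicator A (Vl w)"
      using op
    proof eventually_elim
      case (elim w)
      show ?case
      proof (cases "Vl w \<in> A")
        case True
        then have "eventually (\<lambda>n. (indicator A (Vl w) :: real) = indicator A (Vn n w) * indicator A (Vl w)) sequentially"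
          using elim by (auto elim!: eventually_mono)
        from Lim_transform_eventually[OF tendsto_const this] show ?thesis .
      qed simp
    qed
    show "AE w in \<mu>. norm (indicator A (Vn n w) * indicator A (Vl w) :: real) \<le> 1" for n
      by (intro AE_I2) (auto simp: indicator_def)
  qed auto
  have eq: "dd n A = (\<integral>w. indicator A (Vn n w) \<partial>\<mu>) + b - 2 * (\<integral>w. indicator A (Vn n w) * indicator A (Vl w) \<partial>\<mu>)" for n
  proof -
    have "dd n A = (\<integral>w. indicator A (Vn n w) + indicator A (Vl w) - 2 * (indicator A (Vn n w) * indicator A (Vl w)) \<partial>\<mu>)"
      unfolding dd_def by (intro Bochner_Integration.integral_cong refl) (simp add: indicator_def)
    also have "\<dots> = (\<integral>w. indicator A (Vn n w) \<partial>\<mu>) + b - 2 * (\<integral>w. indicator A (Vn n w) * indicator A (Vl w) \<partial>\<mu>)"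
      unfolding b_def using ind_i by simp
    finally show ?thesis .
  qed
  have "(\<lambda>n. (\<integral>w. indicator A (Vn n w) \<partial>\<mu>) + b - 2 * (\<integral>w. indicator A (Vn n w) * indicator A (Vl w) \<partial>\<mu>)) \<longlonglongrightarrow> b + b - 2 * b"
    by (intro tendsto_intros a c)
  then show ?thesis unfolding eq by simp
qed

lemma dd_compl: assumes "A \<in> sets \<mu>" shows "dd n (space \<mu> - A) = dd n A"
  unfolding dd_def
  by (intro Bochner_Integration.integral_cong refl) (auto simp: indicator_def Vn_space Vl_space)

lemma dd_empty: "dd n {} = 0" by (simp add: dd_def)


lemma ind_bdd: "\<bar>indicator A x :: real\<bar> \<le> 1" by (simp split: split_indicator)

lemma dd_union:
  fixes A :: "nat \<Rightarrow> 'a set"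
  assumes A[measurable]: "\<And>i. A i \<in> sets \<mu>" and disj: "disjoint_family A"
    and lim: "\<And>i. (\<lambda>n. dd n (A i)) \<longlonglongrightarrow> 0"
  shows "(\<lambda>n. dd n (\<Union>i. A i)) \<longlonglongrightarrow> 0"
proof (rule tendsto0_eps[OF _ dd_nn])
  fix e :: real assume e: "0 < e"
  define T where "T N = (\<Union>i\<in>{N..}. A i)" for N
  have T_sets[measurable]: "T N \<in> sets \<mu>" for N unfolding T_def by measurable
  have U_sets[measurable]: "(\<Union>i. A i) \<in> sets \<mu>" by measurable
  have Tev: "eventually (\<lambda>N. w \<notin> T N) sequentially" for w
  proof (cases "\<exists>j. w \<in> A j")
    case True
    then obtain j where j: "w \<in> A j" by blast
    show ?thesis
    proof (rule eventually_mono[OF eventually_ge_at_top[of "Suc j"]])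
      fix N assume "Suc j \<le> N"
      show "w \<notin> T N"
      proof
        assume "w \<in> T N"
        then obtain i where i: "i \<ge> N" "w \<in> A i" unfolding T_def by blast
        then have "i \<noteq> j" using \<open>Suc j \<le> N\<close> by linarith
        then have "A i \<inter> A j = {}" using disj by (intro disjoint_family_onD) auto
        then show False using i j by blast
      qed
    qed
  next
    case False then show ?thesis unfolding T_def by auto
  qed
  have tlim: "(\<lambda>N. \<integral>w. Ll w * indicator (T N) w \<partial>\<mu>) \<longlonglongrightarrow> (\<integral>w. 0 \<partial>\<mu>)"
  proof (rule integral_dominated_convergence[where w="Ll"])
    show "AE w in \<mu>. (\<lambda>N. Ll w * indicator (T N) w) \<longlonglongrightarrow> 0"
    proof (intro AE_I2)
      fix w
      have "eventually (\<lambda>N. (0::real) = Ll w * indicator (T N) w) sequentially"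
        using Tev[of w] by eventually_elim simp
      from Lim_transform_eventually[OF tendsto_const this] show "(\<lambda>N. Ll w * indicator (T N) w) \<longlonglongrightarrow> 0" .
    qed
    show "AE w in \<mu>. norm (Ll w * indicator (T N) w) \<le> Ll w" for N
      by (intro AE_I2) (simp add: Ll_nn split: split_indicator)
  qed (use Ll_int in auto)
  then have "eventually (\<lambda>N. (\<integral>w. Ll w * indicator (T N) w \<partial>\<mu>) < e / 4) sequentially"
    using e by (intro order_tendstoD) auto
  then obtain N where tN: "(\<integral>w. Ll w * indicator (T N) w \<partial>\<mu>) < e / 4" by (auto dest: eventually_happens)
  have dec: "indicator (\<Union>i. A i) x = (\<Sum>i<N. indicator (A i) x) + (indicator (T N) x :: real)" for x
  proof -
    have "(\<Union>i. A i) = (\<Union>i\<in>{..<N}. A i) \<union> T N"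
    proof (intro equalityI subsetI)
      fix x assume "x \<in> (\<Union>i. A i)"
      then obtain i where "x \<in> A i" by blast
      then show "x \<in> (\<Union>i\<in>{..<N}. A i) \<union> T N" unfolding T_def by (cases "i < N") auto
    qed (auto simp: T_def)
    moreover have "(\<Union>i\<in>{..<N}. A i) \<inter> T N = {}"
    proof (rule ccontr)
      assume "(\<Union>i\<in>{..<N}. A i) \<inter> T N \<noteq> {}"
      then obtain x i j where "x \<in> A i" "i < N" "x \<in> A j" "j \<ge> N" unfolding T_def by blast
      moreover have "A i \<inter> A j = {}" using disj \<open>i < N\<close> \<open>j \<ge> N\<close> by (intro disjoint_family_onD) auto
      ultimately show False by blast
    qed
    moreover have "indicator (\<Union>i\<in>{..<N}. A i) x = (\<Sum>i<N. indicator (A i) x :: real)"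
      using disj by (intro indicator_UN_disjoint) (auto simp: disjoint_family_on_def)
    ultimately show ?thesis by (simp add: indicator_disj_union)
  qed
  have bound: "\<bar>indicator (\<Union>i. A i) x - indicator (\<Union>i. A i) y\<bar>
      \<le> (\<Sum>i<N. \<bar>indicator (A i) x - indicator (A i) y\<bar>) + indicator (T N) x + (indicator (T N) y :: real)" for x y
  proof -
    have "indicator (\<Union>i. A i) x - indicator (\<Union>i. A i) y
        = (\<Sum>i<N. indicator (A i) x - indicator (A i) y) + (indicator (T N) x - (indicator (T N) y :: real))"
      unfolding dec by (simp add: sum_subtractf)
    then have "\<bar>indicator (\<Union>i. A i) x - indicator (\<Union>i. A i) y\<bar>
        \<le> \<bar>\<Sum>i<N. indicator (A i) x - indicator (A i) y\<bar> + \<bar>indicator (T N) x - (indicator (T N) y :: real)\<bar>"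
      by simp
    also have "\<dots> \<le> (\<Sum>i<N. \<bar>indicator (A i) x - indicator (A i) y\<bar>) + (indicator (T N) x + (indicator (T N) y :: real))"
      by (intro add_mono sum_abs) (simp split: split_indicator)
    finally show ?thesis by simp
  qed
  have iA: "integrable \<mu> (\<lambda>w. \<bar>indicator (A i) (Vn n w) - indicator (A i) (Vl w)\<bar> :: real)" for i n
    by (rule bdd_int[where C=1]) (measurable, simp split: split_indicator)
  have iT1: "integrable \<mu> (\<lambda>w. indicator (T N) (Vn n w) :: real)" for n
    by (rule bdd_int[OF _ ind_bdd]) measurable
  have iT2: "integrable \<mu> (\<lambda>w. indicator (T N) (Vl w) :: real)"
    by (rule bdd_int[OF _ ind_bdd]) measurable
  have ddb: "dd n (\<Union>i. A i) \<le> (\<Sum>i<N. dd n (A i)) + (\<integral>w. Ll w * indicator (T N) w \<partial>\<mu>) + (\<integral>w. \<bar>Ln n w - Ll w\<bar> \<partial>\<mu>)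
      + (\<integral>w. Ll w * indicator (T N) w \<partial>\<mu>)" for n
  proof -
    have "dd n (\<Union>i. A i) \<le> (\<integral>w. (\<Sum>i<N. \<bar>indicator (A i) (Vn n w) - indicator (A i) (Vl w)\<bar>)
         + indicator (T N) (Vn n w) + indicator (T N) (Vl w) \<partial>\<mu>)"
      unfolding dd_def
    proof (rule integral_mono)
      show "integrable \<mu> (\<lambda>w. \<bar>indicator (\<Union>i. A i) (Vn n w) - indicator (\<Union>i. A i) (Vl w)\<bar> :: real)"
        by (rule bdd_int[where C=1]) (measurable, simp split: split_indicator)
      show "integrable \<mu> (\<lambda>w. (\<Sum>i<N. \<bar>indicator (A i) (Vn n w) - indicator (A i) (Vl w)\<bar>)
         + indicator (T N) (Vn n w) + (indicator (T N) (Vl w) :: real))"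
        using iA iT1 iT2 by (intro Bochner_Integration.integrable_add Bochner_Integration.integrable_sum) auto
    qed (rule bound)
    also have "\<dots> = (\<Sum>i<N. dd n (A i)) + (\<integral>w. indicator (T N) (Vn n w) \<partial>\<mu>) + (\<integral>w. indicator (T N) (Vl w) \<partial>\<mu>)"
      unfolding dd_def using iA iT1 iT2
      by (simp add: Bochner_Integration.integral_add Bochner_Integration.integral_sum Bochner_Integration.integrable_sum)
    also have "(\<integral>w. indicator (T N) (Vn n w) \<partial>\<mu>) \<le> (\<integral>w. Ll w * indicator (T N) w \<partial>\<mu>) + (\<integral>w. \<bar>Ln n w - Ll w\<bar> \<partial>\<mu>)"
      using dens_diff[of "indicator (T N)" n] unfolding ind_int_n[OF T_sets] by (simp add: ind_bdd)
    also have "(\<integral>w. indicator (T N) (Vl w) \<partial>\<mu>) = (\<integral>w. Ll w * indicator (T N) w \<partial>\<mu>)"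
      by (rule ind_int_l[OF T_sets])
    finally show ?thesis by simp
  qed
  have ev1: "eventually (\<lambda>n. (\<Sum>i<N. dd n (A i)) < e / 4) sequentially"
  proof -
    have "(\<lambda>n. \<Sum>i<N. dd n (A i)) \<longlonglongrightarrow> (\<Sum>i<N. 0)" by (intro tendsto_sum lim)
    then show ?thesis using e by (intro order_tendstoD) auto
  qed
  have ev2: "eventually (\<lambda>n. (\<integral>w. \<bar>Ln n w - Ll w\<bar> \<partial>\<mu>) < e / 4) sequentially"
    using L1conv e by (intro order_tendstoD) auto
  show "eventually (\<lambda>n. dd n (\<Union>i. A i) \<le> e) sequentially"
    using ev1 ev2
  proof eventually_elim
    case (elim n) then show ?case using ddb[of n] tN by linarith
  qed
qed


lemma dd_all:
  assumes Gst: "Int_stable G" and Gsub: "G \<subseteq> Pow (space \<mu>)" and Gsig: "sigma_sets (space \<mu>) G = sets \<mu>"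
    and op: "\<And>A. A \<in> G \<Longrightarrow> AE w in \<mu>. Vl w \<in> A \<longrightarrow> eventually (\<lambda>n. Vn n w \<in> A) sequentially"
    and A: "A \<in> sets \<mu>"
  shows "(\<lambda>n. dd n A) \<longlonglongrightarrow> 0"
proof -
  from A have "A \<in> sigma_sets (space \<mu>) G" by (simp add: Gsig)
  with Gst Gsub show ?thesis
  proof (induct rule: sigma_sets_induct_disjoint)
    case (basic A)
    then have "A \<in> sets \<mu>" using Gsig sigma_sets.Basic[of A G "space \<mu>"] by simp
    then show ?case using op[OF basic] by (intro dd_basic)
  next
    case empty then show ?case by (simp add: dd_empty)
  next
    case (compl A)
    then have "A \<in> sets \<mu>" using Gsig by simp
    then show ?case using compl(2) by (simp add: dd_compl)
  next
    case (union A)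
    then have "\<And>i. A i \<in> sets \<mu>" using Gsig by auto
    then show ?case using union by (intro dd_union) auto
  qed
qed

end

locale PCgen2 = PCgen +
  fixes G :: "'a set set"
  assumes Gst: "Int_stable G" and Gsub: "G \<subseteq> Pow (space \<mu>)" and Gsig: "sigma_sets (space \<mu>) G = sets \<mu>"
    and op: "\<And>A. A \<in> G \<Longrightarrow> AE w in \<mu>. Vl w \<in> A \<longrightarrow> eventually (\<lambda>n. Vn n w \<in> A) sequentially"
begin

lemma dd_lim: "A \<in> sets \<mu> \<Longrightarrow> (\<lambda>n. dd n A) \<longlonglongrightarrow> 0"
  by (rule dd_all[OF Gst Gsub Gsig op])

definition PP :: "('a \<Rightarrow> real) \<Rightarrow> bool" where
  "PP f \<longleftrightarrow> (\<lambda>n. \<integral>w. min 1 \<bar>f (Vn n w) - f (Vl w)\<bar> \<partial>\<mu>) \<longlonglongrightarrow> 0"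

lemma min1_tri: "min 1 \<bar>x + y\<bar> \<le> min 1 \<bar>x\<bar> + min 1 \<bar>y :: real\<bar>"
  by (auto simp: min_def abs_if)

lemma min1_cmul: "min 1 \<bar>c * x\<bar> \<le> (1 + \<bar>c\<bar>) * min 1 \<bar>x :: real\<bar>"
proof (cases "\<bar>x\<bar> \<le> 1")
  case True
  then have "min 1 \<bar>c * x\<bar> \<le> \<bar>c\<bar> * \<bar>x\<bar>" by (simp add: abs_mult)
  also have "\<dots> \<le> (1 + \<bar>c\<bar>) * \<bar>x\<bar>" by (intro mult_right_mono) auto
  finally show ?thesis using True by (simp add: min_def)
next
  case False
  then have "min 1 \<bar>x\<bar> = 1" by simp
  moreover have "min 1 \<bar>c * x\<bar> \<le> 1" by simp
  ultimately show ?thesis by simp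
qed

lemma min_int2: fixes f :: "'a \<Rightarrow> real" assumes [measurable]: "f \<in> borel_measurable \<mu>" shows "integrable \<mu> (\<lambda>w. min 1 \<bar>f w\<bar>)"
  by (rule bdd_int[where C=1]) auto

lemma PP_cong: assumes "\<And>x. x \<in> space \<mu> \<Longrightarrow> f x = g x" "PP f" shows "PP g"
proof -
  have "(\<integral>w. min 1 \<bar>f (Vn n w) - f (Vl w)\<bar> \<partial>\<mu>) = (\<integral>w. min 1 \<bar>g (Vn n w) - g (Vl w)\<bar> \<partial>\<mu>)" for n
    by (intro Bochner_Integration.integral_cong refl) (simp add: assms(1) Vn_space Vl_space)
  then show ?thesis using assms(2) unfolding PP_def by simp
qed

lemma PP_ind: assumes "A \<in> sets \<mu>" shows "PP (indicator A)"
proof -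
  have "(\<integral>w. min 1 \<bar>indicator A (Vn n w) - indicator A (Vl w)\<bar> \<partial>\<mu>) = dd n A" for n
    unfolding dd_def by (intro Bochner_Integration.integral_cong refl) (simp split: split_indicator)
  then show ?thesis using dd_lim[OF assms] unfolding PP_def by simp
qed


lemma PP_zero: "PP (\<lambda>x. 0)" unfolding PP_def by simp

lemma PP_add: assumes [measurable]: "f \<in> borel_measurable \<mu>" "g \<in> borel_measurable \<mu>" and P: "PP f" "PP g"
  shows "PP (\<lambda>x. f x + g x)"
  unfolding PP_def
proof (rule squeeze0)
  show "(\<lambda>n. (\<integral>w. min 1 \<bar>f (Vn n w) - f (Vl w)\<bar> \<partial>\<mu>) + (\<integral>w. min 1 \<bar>g (Vn n w) - g (Vl w)\<bar> \<partial>\<mu>)) \<longlonglongrightarrow> 0"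
    using tendsto_add[OF P[unfolded PP_def]] by simp
  show "0 \<le> (\<integral>w. min 1 \<bar>f (Vn n w) + g (Vn n w) - (f (Vl w) + g (Vl w))\<bar> \<partial>\<mu>)" for n by simp
  show "(\<integral>w. min 1 \<bar>f (Vn n w) + g (Vn n w) - (f (Vl w) + g (Vl w))\<bar> \<partial>\<mu>)
      \<le> (\<integral>w. min 1 \<bar>f (Vn n w) - f (Vl w)\<bar> \<partial>\<mu>) + (\<integral>w. min 1 \<bar>g (Vn n w) - g (Vl w)\<bar> \<partial>\<mu>)" for n
  proof -
    have "(\<integral>w. min 1 \<bar>f (Vn n w) + g (Vn n w) - (f (Vl w) + g (Vl w))\<bar> \<partial>\<mu>)
      \<le> (\<integral>w. min 1 \<bar>f (Vn n w) - f (Vl w)\<bar> + min 1 \<bar>g (Vn n w) - g (Vl w)\<bar> \<partial>\<mu>)"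
    proof (rule integral_mono)
      show "min 1 \<bar>f (Vn n w) + g (Vn n w) - (f (Vl w) + g (Vl w))\<bar> \<le> min 1 \<bar>f (Vn n w) - f (Vl w)\<bar> + min 1 \<bar>g (Vn n w) - g (Vl w)\<bar>" for w
        using min1_tri[of "f (Vn n w) - f (Vl w)" "g (Vn n w) - g (Vl w)"] by (simp add: algebra_simps)
    qed (intro min_int2 Bochner_Integration.integrable_add; measurable)+
    also have "\<dots> = (\<integral>w. min 1 \<bar>f (Vn n w) - f (Vl w)\<bar> \<partial>\<mu>) + (\<integral>w. min 1 \<bar>g (Vn n w) - g (Vl w)\<bar> \<partial>\<mu>)"
      by (intro Bochner_Integration.integral_add min_int2) measurable
    finally show ?thesis .
  qed
qed

lemma PP_cmul: assumes [measurable]: "f \<in> borel_measurable \<mu>" and P: "PP f"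
  shows "PP (\<lambda>x. c * f x)"
  unfolding PP_def
proof (rule squeeze0)
  show "(\<lambda>n. (1 + \<bar>c\<bar>) * (\<integral>w. min 1 \<bar>f (Vn n w) - f (Vl w)\<bar> \<partial>\<mu>)) \<longlonglongrightarrow> 0"
    using tendsto_mult[OF tendsto_const P[unfolded PP_def], of "1 + \<bar>c\<bar>"] by simp
  show "0 \<le> (\<integral>w. min 1 \<bar>c * f (Vn n w) - c * f (Vl w)\<bar> \<partial>\<mu>)" for n by simp
  show "(\<integral>w. min 1 \<bar>c * f (Vn n w) - c * f (Vl w)\<bar> \<partial>\<mu>) \<le> (1 + \<bar>c\<bar>) * (\<integral>w. min 1 \<bar>f (Vn n w) - f (Vl w)\<bar> \<partial>\<mu>)" for n
  proof -
    have "(\<integral>w. min 1 \<bar>c * f (Vn n w) - c * f (Vl w)\<bar> \<partial>\<mu>) \<le> (\<integral>w. (1 + \<bar>c\<bar>) * min 1 \<bar>f (Vn n w) - f (Vl w)\<bar> \<partial>\<mu>)"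
    proof (rule integral_mono)
      show "min 1 \<bar>c * f (Vn n w) - c * f (Vl w)\<bar> \<le> (1 + \<bar>c\<bar>) * min 1 \<bar>f (Vn n w) - f (Vl w)\<bar>" for w
        using min1_cmul[of c "f (Vn n w) - f (Vl w)"] by (simp add: right_diff_distrib)
    qed (intro min_int2 integrable_mult_right; measurable)+
    then show ?thesis by simp
  qed
qed

lemma PP_sum: assumes "finite S" "\<And>y. y \<in> S \<Longrightarrow> A y \<in> sets \<mu>"
  shows "PP (\<lambda>x. \<Sum>y\<in>S. indicator (A y) x *\<^sub>R c y)"
  using assms
proof (induction S rule: finite_induct)
  case empty then show ?case by (simp add: PP_zero)
next
  case (insert y S)
  have [measurable]: "A z \<in> sets \<mu>" if "z \<in> insert y S" for z using insert that by auto
  have m1: "(\<lambda>x. c y * indicator (A y) x) \<in> borel_measurable \<mu>" by measurable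
  have m2: "(\<lambda>x. \<Sum>z\<in>S. indicator (A z) x *\<^sub>R c z) \<in> borel_measurable \<mu>"
    by (intro borel_measurable_sum borel_measurable_scaleR borel_measurable_const borel_measurable_indicator) (use insert in auto)
  have "PP (\<lambda>x. c y * indicator (A y) x + (\<Sum>z\<in>S. indicator (A z) x *\<^sub>R c z))"
    by (intro PP_add m1 m2 PP_cmul PP_ind insert) auto
  moreover have "(\<lambda>x. c y * indicator (A y) x + (\<Sum>z\<in>S. indicator (A z) x *\<^sub>R c z)) = (\<lambda>x. \<Sum>z\<in>insert y S. indicator (A z) x *\<^sub>R c z)"
    by (rule ext) (simp only: sum.insert[OF insert.hyps(1) insert.hyps(2)] real_scaleR_def mult.commute)
  ultimately show ?case by simp
qed

lemma PP_simple: assumes "simple_function \<mu> s" shows "PP s"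
proof (rule PP_cong)
  show "(\<Sum>y\<in>s ` space \<mu>. indicator (s -` {y} \<inter> space \<mu>) x *\<^sub>R y) = s x" if "x \<in> space \<mu>" for x
    by (rule simple_function_indicator_representation_banach[OF assms that, symmetric])
  show "PP (\<lambda>x. \<Sum>y\<in>s ` space \<mu>. indicator (s -` {y} \<inter> space \<mu>) x *\<^sub>R y)"
    using assms by (intro PP_sum) (auto simp: simple_function_def)
qed


lemma PP_all: fixes f :: "'a \<Rightarrow> real" assumes f[measurable]: "f \<in> borel_measurable \<mu>" shows "PP f"
proof -
  obtain s where s: "\<And>i. simple_function \<mu> (s i)" and slim: "\<And>x. x \<in> space \<mu> \<Longrightarrow> (\<lambda>i. s i x) \<longlonglongrightarrow> f x"
    using borel_measurable_implies_sequence_metric[OF f, of 0] by blast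
  have sm[measurable]: "s i \<in> borel_measurable \<mu>" for i by (rule borel_measurable_simple_function[OF s])
  define e where "e m = (\<integral>w. Ll w * min 1 \<bar>f w - s m w\<bar> \<partial>\<mu>)" for m
  have elim: "e \<longlonglongrightarrow> (\<integral>w. 0 \<partial>\<mu>)" unfolding e_def
  proof (rule integral_dominated_convergence[where w="Ll"])
    show "AE w in \<mu>. (\<lambda>m. Ll w * min 1 \<bar>f w - s m w\<bar>) \<longlonglongrightarrow> 0"
    proof (rule AE_I2)
      fix w assume w: "w \<in> space \<mu>"
      have "(\<lambda>m. Ll w * min 1 \<bar>f w - s m w\<bar>) \<longlonglongrightarrow> Ll w * min 1 \<bar>f w - f w\<bar>"
        by (intro tendsto_intros slim[OF w])
      then show "(\<lambda>m. Ll w * min 1 \<bar>f w - s m w\<bar>) \<longlonglongrightarrow> 0" by simp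
    qed
    show "AE w in \<mu>. norm (Ll w * min 1 \<bar>f w - s m w\<bar>) \<le> Ll w" for m
      by (intro AE_I2) (simp add: abs_mult Ll_nn mult_left_le)
  qed (use Ll_int in auto)
  show ?thesis unfolding PP_def
  proof (rule tendsto0_eps)
    fix eps :: real assume eps: "0 < eps"
    have "eventually (\<lambda>m. e m < eps / 4) sequentially" using elim eps by (intro order_tendstoD) auto
    then obtain m where em: "e m < eps / 4" by (auto dest: eventually_happens)
    have ev1: "eventually (\<lambda>n. (\<integral>w. min 1 \<bar>s m (Vn n w) - s m (Vl w)\<bar> \<partial>\<mu>) < eps / 4) sequentially"
      using PP_simple[OF s[of m]] eps unfolding PP_def by (intro order_tendstoD) auto
    have ev2: "eventually (\<lambda>n. (\<integral>w. \<bar>Ln n w - Ll w\<bar> \<partial>\<mu>) < eps / 4) sequentially"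
      using L1conv eps by (intro order_tendstoD) auto
    have bnd: "(\<integral>w. min 1 \<bar>f (Vn n w) - f (Vl w)\<bar> \<partial>\<mu>) \<le>
        (e m + (\<integral>w. \<bar>Ln n w - Ll w\<bar> \<partial>\<mu>)) + (\<integral>w. min 1 \<bar>s m (Vn n w) - s m (Vl w)\<bar> \<partial>\<mu>) + e m" for n
    proof -
      have i1: "integrable \<mu> (\<lambda>w. min 1 \<bar>f (Vn n w) - s m (Vn n w)\<bar>)" by (rule min_int2) measurable
      have i2: "integrable \<mu> (\<lambda>w. min 1 \<bar>s m (Vn n w) - s m (Vl w)\<bar>)" by (rule min_int2) measurable
      have i3: "integrable \<mu> (\<lambda>w. min 1 \<bar>s m (Vl w) - f (Vl w)\<bar>)" by (rule min_int2) measurable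
      have "(\<integral>w. min 1 \<bar>f (Vn n w) - f (Vl w)\<bar> \<partial>\<mu>) \<le>
          (\<integral>w. min 1 \<bar>f (Vn n w) - s m (Vn n w)\<bar> + min 1 \<bar>s m (Vn n w) - s m (Vl w)\<bar> + min 1 \<bar>s m (Vl w) - f (Vl w)\<bar> \<partial>\<mu>)"
      proof (rule integral_mono)
        fix w
        have "min 1 \<bar>f (Vn n w) - f (Vl w)\<bar> \<le> min 1 \<bar>f (Vn n w) - s m (Vn n w)\<bar> + min 1 \<bar>s m (Vn n w) - f (Vl w)\<bar>"
          using min1_tri[of "f (Vn n w) - s m (Vn n w)" "s m (Vn n w) - f (Vl w)"] by simp
        also have "min 1 \<bar>s m (Vn n w) - f (Vl w)\<bar> \<le> min 1 \<bar>s m (Vn n w) - s m (Vl w)\<bar> + min 1 \<bar>s m (Vl w) - f (Vl w)\<bar>"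
          using min1_tri[of "s m (Vn n w) - s m (Vl w)" "s m (Vl w) - f (Vl w)"] by simp
        finally show "min 1 \<bar>f (Vn n w) - f (Vl w)\<bar> \<le> min 1 \<bar>f (Vn n w) - s m (Vn n w)\<bar> + min 1 \<bar>s m (Vn n w) - s m (Vl w)\<bar> + min 1 \<bar>s m (Vl w) - f (Vl w)\<bar>"
          by simp
      qed (intro min_int2 Bochner_Integration.integrable_add i1 i2 i3; measurable)+
      also have "\<dots> = (\<integral>w. min 1 \<bar>f (Vn n w) - s m (Vn n w)\<bar> \<partial>\<mu>) + (\<integral>w. min 1 \<bar>s m (Vn n w) - s m (Vl w)\<bar> \<partial>\<mu>)
          + (\<integral>w. min 1 \<bar>s m (Vl w) - f (Vl w)\<bar> \<partial>\<mu>)"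
        using i1 i2 i3 by simp
      also have "(\<integral>w. min 1 \<bar>f (Vn n w) - s m (Vn n w)\<bar> \<partial>\<mu>) = (\<integral>w. Ln n w * min 1 \<bar>f w - s m w\<bar> \<partial>\<mu>)"
        by (rule trans_n) measurable
      also have "\<dots> \<le> e m + (\<integral>w. \<bar>Ln n w - Ll w\<bar> \<partial>\<mu>)"
        using dens_diff[of "\<lambda>w. min 1 \<bar>f w - s m w\<bar>" n] unfolding e_def by simp
      also have "(\<integral>w. min 1 \<bar>s m (Vl w) - f (Vl w)\<bar> \<partial>\<mu>) = (\<integral>w. Ll w * min 1 \<bar>s m w - f w\<bar> \<partial>\<mu>)"
        by (rule trans_l) measurable
      also have "\<dots> = e m" unfolding e_def by (simp add: abs_minus_commute)
      finally show ?thesis by simp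
    qed
    show "eventually (\<lambda>n. (\<integral>w. min 1 \<bar>f (Vn n w) - f (Vl w)\<bar> \<partial>\<mu>) \<le> eps) sequentially"
      using ev1 ev2
    proof eventually_elim
      case (elim n) then show ?case using bnd[of n] em by linarith
    qed
  qed simp
qed

end


lemma tendsto_fun_comp:
  fixes X :: "nat \<Rightarrow> (nat \<Rightarrow> 'b::topological_space)"
  assumes "\<And>i. (\<lambda>n. X n i) \<longlonglongrightarrow> x i"
  shows "X \<longlonglongrightarrow> x"
proof -
  have "limitin (product_topology (\<lambda>i. euclidean) UNIV) X x sequentially"
    using assms by (simp add: limitin_componentwise)
  then show ?thesis by (simp add: euclidean_product_topology)
qed

lemma space_filt: "space (filt s) = path_carrier"
  unfolding filt_def by (rule space_measure_of) auto

lemma sets_filt: "sets (filt s) = sigma_sets path_carrier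
     {{w \<in> path_carrier. w r \<in> A} | r A. r \<in> {0..s} \<and> A \<in> sets borel}"
  unfolding filt_def by (rule sets_measure_of) auto

lemma coord_meas: "(\<lambda>w. w t) \<in> borel_measurable (filt 1)"
proof (cases "t \<in> {0..1}")
  case True
  show ?thesis
  proof (rule borel_measurableI)
    fix S :: "(real^'d) set" assume "open S"
    have "{w \<in> path_carrier. w t \<in> S} \<in> {{w \<in> path_carrier. w r \<in> A} | r A. r \<in> {0..1} \<and> A \<in> sets borel}"
      by (rule CollectI, rule exI[of _ t], rule exI[of _ S]) (use True \<open>open S\<close> in auto)
    then have "{w \<in> path_carrier. w t \<in> S} \<in> sets (filt 1)"
      unfolding sets_filt by (rule sigma_sets.Basic)
    moreover have "(\<lambda>w. w t) -` S \<inter> space (filt 1) = {w \<in> path_carrier. w t \<in> S}"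
      by (auto simp: space_filt)
    ultimately show "(\<lambda>w. w t) -` S \<inter> space (filt 1) \<in> sets (filt 1)" by simp
  qed
next
  case False
  have "(\<lambda>w. 0::real^'a) \<in> borel_measurable (filt 1)" by simp
  then show ?thesis
    by (rule measurable_cong[THEN iffD1, rotated]) (use False in \<open>auto simp: space_filt path_carrier_def\<close>)
qed

lemma seq_meas: "(\<lambda>w i. w (r i)) \<in> measurable (filt 1) (borel :: (nat \<Rightarrow> real^'d) measure)"
proof -
  have "(\<lambda>w i. w (r i)) \<in> measurable (filt 1) (Pi\<^sub>M UNIV (\<lambda>i. borel :: (real^'d) measure))"
    by (rule measurable_PiM_single') (auto intro: coord_meas)
  then show ?thesis using measurable_cong_sets[OF refl sets_PiM_equal_borel] by blast
qed

definition GG :: "'d::finite path set set" where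
  "GG = {{w \<in> path_carrier. (\<lambda>i. w (r i)) \<in> B} | (r :: nat \<Rightarrow> real) (B :: (nat \<Rightarrow> real^'d) set). open B}"

lemma GG_sub: "(GG :: 'd::finite path set set) \<subseteq> Pow path_carrier" unfolding GG_def by auto

lemma GG_sets: "(GG :: 'd::finite path set set) \<subseteq> sets (filt 1)"
proof
  fix A :: "'d path set" assume "A \<in> GG"
  then obtain r and B :: "(nat \<Rightarrow> real^'d) set" where A: "A = {w \<in> path_carrier. (\<lambda>i. w (r i)) \<in> B}" "open B"
    unfolding GG_def by blast
  have "(\<lambda>w i. w (r i)) -` B \<inter> space (filt 1) \<in> sets (filt 1)"
    by (rule measurable_sets[OF seq_meas]) (use A(2) in auto)
  moreover have "(\<lambda>w i. w (r i)) -` B \<inter> space (filt 1) = A" by (auto simp: A space_filt)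
  ultimately show "A \<in> sets (filt 1)" by simp
qed


lemma open_sub_even: "open B \<Longrightarrow> open {x :: nat \<Rightarrow> 'b::topological_space. (\<lambda>i. x (f i)) \<in> B}"
proof -
  assume "open B"
  have c: "continuous_on UNIV (\<lambda>x :: nat \<Rightarrow> 'b. (\<lambda>i. x (f i)))"
    by (intro continuous_on_coordinatewise_then_product continuous_on_product_coordinates)
  have "open ((\<lambda>x :: nat \<Rightarrow> 'b. (\<lambda>i. x (f i))) -` B)"
    by (rule open_vimage[OF \<open>open B\<close> c])
  then show ?thesis by (simp add: vimage_def)
qed

lemma open_proj: "open S \<Longrightarrow> open {x :: nat \<Rightarrow> 'b::topological_space. x j \<in> S}"
proof -
  assume "open S"
  have c: "continuous_on UNIV (\<lambda>x :: nat \<Rightarrow> 'b. x j)" by (rule continuous_on_product_coordinates)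
  have "open ((\<lambda>x :: nat \<Rightarrow> 'b. x j) -` S)" by (rule open_vimage[OF \<open>open S\<close> c])
  then show ?thesis by (simp add: vimage_def)
qed

lemma GG_Int_stable: "Int_stable (GG :: 'd::finite path set set)"
proof (rule Int_stableI)
  fix A1 A2 :: "'d path set" assume "A1 \<in> GG" "A2 \<in> GG"
  then obtain r1 r2 and B1 B2 :: "(nat \<Rightarrow> real^'d) set" where
    A: "A1 = {w \<in> path_carrier. (\<lambda>i. w (r1 i)) \<in> B1}" "open B1"
       "A2 = {w \<in> path_carrier. (\<lambda>i. w (r2 i)) \<in> B2}" "open B2"
    unfolding GG_def by blast
  define r where "r i = (if even i then r1 (i div 2) else r2 (i div 2))" for i
  define B where "B = {x :: nat \<Rightarrow> real^'d. (\<lambda>i. x (2 * i)) \<in> B1} \<inter> {x. (\<lambda>i. x (2 * i + 1)) \<in> B2}"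
  have "open B" unfolding B_def by (intro open_Int open_sub_even A)
  have e1: "(\<lambda>i. w (r (2 * i))) = (\<lambda>i. w (r1 i))" for w :: "'d path" by (simp add: r_def)
  have e2: "(\<lambda>i. w (r (2 * i + 1))) = (\<lambda>i. w (r2 i))" for w :: "'d path" by (simp add: r_def)
  have "A1 \<inter> A2 = {w \<in> path_carrier. (\<lambda>i. w (r i)) \<in> B}"
    unfolding A B_def using e1 e2 by auto
  then show "A1 \<inter> A2 \<in> GG" unfolding GG_def using \<open>open B\<close> by blast
qed

lemma GG_sigma: "sigma_sets path_carrier (GG :: 'd::finite path set set) = sets (filt 1)"
proof (rule antisym)
  show "sigma_sets path_carrier GG \<subseteq> sets (filt 1)"
    using GG_sets by (metis sets.sigma_sets_subset space_filt)
  show "sets (filt 1) \<subseteq> sigma_sets path_carrier (GG :: 'd::finite path set set)"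
    unfolding sets_filt
  proof (rule sigma_sets_mono, rule subsetI)
    fix X :: "'d path set" assume "X \<in> {{w \<in> path_carrier. w r \<in> A} | r A. r \<in> {0..1} \<and> A \<in> sets borel}"
    then obtain r and A :: "(real^'d) set" where X: "X = {w \<in> path_carrier. w r \<in> A}" "A \<in> sets borel" by blast
    let ?M = "sigma path_carrier (GG :: 'd path set set)"
    have sp: "space ?M = path_carrier" by (rule space_measure_of[OF GG_sub])
    have ss: "sets ?M = sigma_sets path_carrier GG" by (rule sets_measure_of[OF GG_sub])
    have "(\<lambda>w. w r) \<in> borel_measurable ?M"
    proof (rule borel_measurableI)
      fix S :: "(real^'d) set" assume "open S"
      have "{w \<in> path_carrier. (\<lambda>i. w ((\<lambda>_. r) i)) \<in> {x :: nat \<Rightarrow> real^'d. x 0 \<in> S}} \<in> GG"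
        unfolding GG_def by (rule CollectI, rule exI[of _ "\<lambda>_. r"], rule exI[of _ "{x :: nat \<Rightarrow> real^'d. x 0 \<in> S}"]) (use open_proj[OF \<open>open S\<close>, of 0] in simp)
      then have "{w \<in> path_carrier. w r \<in> S} \<in> sets ?M" unfolding ss by auto
      moreover have "(\<lambda>w. w r) -` S \<inter> space ?M = {w \<in> path_carrier. w r \<in> S}" by (auto simp: sp)
      ultimately show "(\<lambda>w. w r) -` S \<inter> space ?M \<in> sets ?M" by simp
    qed
    then have "(\<lambda>w. w r) -` A \<inter> space ?M \<in> sets ?M" using X(2) by (rule measurable_sets)
    moreover have "(\<lambda>w. w r) -` A \<inter> space ?M = X" by (auto simp: sp X)
    ultimately show "X \<in> sigma_sets path_carrier GG" by (simp add: ss)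
  qed
qed

lemma GG_open:
  assumes "A \<in> (GG :: 'd::finite path set set)" and w: "\<forall>t. (\<lambda>n. V n w t) \<longlonglongrightarrow> Vw t"
    and sp: "\<And>n. V n w \<in> path_carrier" and "Vw \<in> A"
  shows "eventually (\<lambda>n. V n w \<in> A) sequentially"
proof -
  obtain r and B :: "(nat \<Rightarrow> real^'d) set" where A: "A = {w \<in> path_carrier. (\<lambda>i. w (r i)) \<in> B}" "open B"
    using assms(1) unfolding GG_def by blast
  have t: "(\<lambda>n. (\<lambda>i. V n w (r i))) \<longlonglongrightarrow> (\<lambda>i. Vw (r i))"
    by (rule tendsto_fun_comp) (use w in auto)
  have m: "(\<lambda>i. Vw (r i)) \<in> B" using assms(4) A by auto
  have "eventually (\<lambda>n. (\<lambda>i. V n w (r i)) \<in> B) sequentially"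
    by (rule topological_tendstoD[OF t A(2) m])
  then show ?thesis by eventually_elim (use sp A in auto)
qed



locale PA = prob_space \<mu> for \<mu> :: "'d::finite path measure" +
  fixes ud :: "real \<Rightarrow> real \<Rightarrow> 'd path \<Rightarrow> real^'d"
  assumes sqint: "\<And>l. sq_int_process \<mu> (ud l)"
    and diff: "\<And>l. \<exists>D. sq_int_process \<mu> D \<and>
        ((\<lambda>h. \<integral>(s, w). (norm ((1 / h) *\<^sub>R (ud (l + h) s w - ud l s w) - D s w))\<^sup>2 \<partial>time_path \<mu>)
          \<longlongrightarrow> 0) (at 0)"
begin

abbreviation "T \<equiv> restrict_space lborel {0..1::real}"

lemma T_fin: "finite_measure T"
proof (rule finite_measureI)
  have "emeasure T (space T) = emeasure lborel {0..1::real}"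
    by (simp add: emeasure_restrict_space space_restrict_space)
  then show "emeasure T (space T) \<noteq> \<infinity>" by simp
qed

lemma pair: "pair_sigma_finite T \<mu>"
proof -
  interpret T: finite_measure T by (rule T_fin)
  show ?thesis by unfold_locales
qed

lemma sq_meas: "sq_int_process \<mu> v \<Longrightarrow> (\<lambda>(s, w). v s w) \<in> borel_measurable (T \<Otimes>\<^sub>M \<mu>)"
  by (simp add: sq_int_process_def time_path_def)

lemma sq_int: "sq_int_process \<mu> v \<Longrightarrow> integrable (T \<Otimes>\<^sub>M \<mu>) (\<lambda>(s, w). (norm (v s w))\<^sup>2)"
  by (simp add: sq_int_process_def time_path_def)

lemma norm_diff_sq: "(norm (a - b))\<^sup>2 \<le> 2 * (norm a)\<^sup>2 + 2 * (norm (b :: 'b::real_normed_vector))\<^sup>2"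
proof -
  have "norm (a - b) \<le> norm a + norm b" by (rule norm_triangle_ineq4)
  then have "(norm (a - b))\<^sup>2 \<le> (norm a + norm b)\<^sup>2" by (intro power_mono) auto
  also have "\<dots> \<le> 2 * (norm a)\<^sup>2 + 2 * (norm b)\<^sup>2"
    using sum_squares_bound[of "norm a" "norm b"] by (simp add: power2_eq_square algebra_simps)
  finally show ?thesis .
qed

lemma sq_diff_int:
  assumes "sq_int_process \<mu> u" "sq_int_process \<mu> v"
  shows "integrable (T \<Otimes>\<^sub>M \<mu>) (\<lambda>(s, w). (norm (u s w - v s w))\<^sup>2)"
proof (rule Bochner_Integration.integrable_bound[where f="\<lambda>(s, w). 2 * (norm (u s w))\<^sup>2 + 2 * (norm (v s w))\<^sup>2"])
  show "integrable (T \<Otimes>\<^sub>M \<mu>) (\<lambda>(s, w). 2 * (norm (u s w))\<^sup>2 + 2 * (norm (v s w))\<^sup>2)"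
  proof -
    have e: "(\<lambda>(s, w). 2 * (norm (u s w))\<^sup>2 + 2 * (norm (v s w))\<^sup>2) =
        (\<lambda>x. 2 * (case x of (s, w) \<Rightarrow> (norm (u s w))\<^sup>2) + 2 * (case x of (s, w) \<Rightarrow> (norm (v s w))\<^sup>2))"
      by (auto simp: fun_eq_iff split: prod.split)
    show ?thesis unfolding e
      by (intro Bochner_Integration.integrable_add integrable_mult_right sq_int assms)
  qed
  have hm: "(\<lambda>x. u (fst x) (snd x)) \<in> borel_measurable (T \<Otimes>\<^sub>M \<mu>)" "(\<lambda>x. v (fst x) (snd x)) \<in> borel_measurable (T \<Otimes>\<^sub>M \<mu>)"
    using sq_meas assms by (auto simp: case_prod_beta')
  have "(\<lambda>x. (norm (u (fst x) (snd x) - v (fst x) (snd x)))\<^sup>2) \<in> borel_measurable (T \<Otimes>\<^sub>M \<mu>)"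
    using hm by measurable
  then show "(\<lambda>(s, w). (norm (u s w - v s w))\<^sup>2) \<in> borel_measurable (T \<Otimes>\<^sub>M \<mu>)"
    by (simp add: case_prod_beta')
  show "AE x in T \<Otimes>\<^sub>M \<mu>. norm ((case x of (s, w) \<Rightarrow> (norm (u s w - v s w))\<^sup>2)) \<le>
          norm (case x of (s, w) \<Rightarrow> 2 * (norm (u s w))\<^sup>2 + 2 * (norm (v s w))\<^sup>2)"
    by (intro AE_I2) (auto simp: norm_diff_sq)
qed


lemma sq_lin:
  assumes u: "sq_int_process \<mu> u" and v: "sq_int_process \<mu> v"
  shows "sq_int_process \<mu> (\<lambda>s w. a *\<^sub>R u s w - b *\<^sub>R v s w)"
proof -
  have hm: "(\<lambda>x. u (fst x) (snd x)) \<in> borel_measurable (T \<Otimes>\<^sub>M \<mu>)" "(\<lambda>x. v (fst x) (snd x)) \<in> borel_measurable (T \<Otimes>\<^sub>M \<mu>)"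
    using sq_meas u v by (auto simp: case_prod_beta')
  have m: "(\<lambda>x. a *\<^sub>R u (fst x) (snd x) - b *\<^sub>R v (fst x) (snd x)) \<in> borel_measurable (T \<Otimes>\<^sub>M \<mu>)"
    using hm by measurable
  have i: "integrable (T \<Otimes>\<^sub>M \<mu>) (\<lambda>x. 2 * a\<^sup>2 * (case x of (s, w) \<Rightarrow> (norm (u s w))\<^sup>2) + 2 * b\<^sup>2 * (case x of (s, w) \<Rightarrow> (norm (v s w))\<^sup>2))"
    by (intro Bochner_Integration.integrable_add integrable_mult_right sq_int u v)
  have "integrable (T \<Otimes>\<^sub>M \<mu>) (\<lambda>x. (norm (a *\<^sub>R u (fst x) (snd x) - b *\<^sub>R v (fst x) (snd x)))\<^sup>2)"
  proof (rule Bochner_Integration.integrable_bound[OF i])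
    show "(\<lambda>x. (norm (a *\<^sub>R u (fst x) (snd x) - b *\<^sub>R v (fst x) (snd x)))\<^sup>2) \<in> borel_measurable (T \<Otimes>\<^sub>M \<mu>)"
      using m by measurable
    show "AE x in T \<Otimes>\<^sub>M \<mu>. norm ((norm (a *\<^sub>R u (fst x) (snd x) - b *\<^sub>R v (fst x) (snd x)))\<^sup>2)
        \<le> norm (2 * a\<^sup>2 * (case x of (s, w) \<Rightarrow> (norm (u s w))\<^sup>2) + 2 * b\<^sup>2 * (case x of (s, w) \<Rightarrow> (norm (v s w))\<^sup>2))"
    proof (intro AE_I2)
      fix x :: "real \<times> 'd path"
      obtain s w where x: "x = (s, w)" by (cases x)
      have "(norm (a *\<^sub>R u s w - b *\<^sub>R v s w))\<^sup>2 \<le> 2 * (norm (a *\<^sub>R u s w))\<^sup>2 + 2 * (norm (b *\<^sub>R v s w))\<^sup>2"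
        by (rule norm_diff_sq)
      also have "\<dots> = 2 * a\<^sup>2 * (norm (u s w))\<^sup>2 + 2 * b\<^sup>2 * (norm (v s w))\<^sup>2"
        by (simp add: power_mult_distrib)
      finally show "norm ((norm (a *\<^sub>R u (fst x) (snd x) - b *\<^sub>R v (fst x) (snd x)))\<^sup>2)
        \<le> norm (2 * a\<^sup>2 * (case x of (s, w) \<Rightarrow> (norm (u s w))\<^sup>2) + 2 * b\<^sup>2 * (case x of (s, w) \<Rightarrow> (norm (v s w))\<^sup>2))"
        by (simp add: x)
    qed
  qed
  then show ?thesis using m unfolding sq_int_process_def time_path_def by (simp add: case_prod_beta')
qed

lemma ud_L2:
  assumes kl: "k \<longlonglongrightarrow> l"
  shows "(\<lambda>n. \<integral>(s, w). (norm (ud (k n) s w - ud l s w))\<^sup>2 \<partial>(T \<Otimes>\<^sub>M \<mu>)) \<longlonglongrightarrow> 0"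
proof -
  obtain D where Dsq: "sq_int_process \<mu> D" and qlim:
    "((\<lambda>h. \<integral>(s, w). (norm ((1 / h) *\<^sub>R (ud (l + h) s w - ud l s w) - D s w))\<^sup>2 \<partial>time_path \<mu>) \<longlongrightarrow> 0) (at 0)"
    using diff[of l] by blast
  define q where "q h = (\<integral>(s, w). (norm ((1 / h) *\<^sub>R (ud (l + h) s w - ud l s w) - D s w))\<^sup>2 \<partial>(T \<Otimes>\<^sub>M \<mu>))" for h
  define C where "C = (\<integral>(s, w). (norm (D s w))\<^sup>2 \<partial>(T \<Otimes>\<^sub>M \<mu>))"
  define B where "B h = 2 * h\<^sup>2 * (q h + C)" for h
  have qlim': "(q \<longlongrightarrow> 0) (at 0)" using qlim unfolding q_def time_path_def .
  have bnd: "(\<integral>(s, w). (norm (ud (l + h) s w - ud l s w))\<^sup>2 \<partial>(T \<Otimes>\<^sub>M \<mu>)) \<le> B h" for h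
  proof (cases "h = 0")
    case True then show ?thesis by (simp add: B_def case_prod_beta')
  next
    case False
    have i1: "integrable (T \<Otimes>\<^sub>M \<mu>) (\<lambda>(s, w). (norm (ud (l + h) s w - ud l s w))\<^sup>2)"
      by (rule sq_diff_int[OF sqint sqint])
    have sq2: "sq_int_process \<mu> (\<lambda>s w. (1 / h) *\<^sub>R (1 *\<^sub>R ud (l + h) s w - 1 *\<^sub>R ud l s w) - 1 *\<^sub>R D s w)"
      by (intro sq_lin Dsq sqint)
    have i2: "integrable (T \<Otimes>\<^sub>M \<mu>) (\<lambda>(s, w). (norm ((1 / h) *\<^sub>R (ud (l + h) s w - ud l s w) - D s w))\<^sup>2)"
      using sq_int[OF sq2] by simp
    have i3: "integrable (T \<Otimes>\<^sub>M \<mu>) (\<lambda>(s, w). (norm (D s w))\<^sup>2)" by (rule sq_int[OF Dsq])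
    have "(\<integral>(s, w). (norm (ud (l + h) s w - ud l s w))\<^sup>2 \<partial>(T \<Otimes>\<^sub>M \<mu>))
        \<le> (\<integral>x. 2 * h\<^sup>2 * (case x of (s, w) \<Rightarrow> (norm ((1 / h) *\<^sub>R (ud (l + h) s w - ud l s w) - D s w))\<^sup>2)
              + 2 * h\<^sup>2 * (case x of (s, w) \<Rightarrow> (norm (D s w))\<^sup>2) \<partial>(T \<Otimes>\<^sub>M \<mu>))"
    proof (rule integral_mono[OF i1])
      show "integrable (T \<Otimes>\<^sub>M \<mu>) (\<lambda>x. 2 * h\<^sup>2 * (case x of (s, w) \<Rightarrow> (norm ((1 / h) *\<^sub>R (ud (l + h) s w - ud l s w) - D s w))\<^sup>2)
              + 2 * h\<^sup>2 * (case x of (s, w) \<Rightarrow> (norm (D s w))\<^sup>2))"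
        by (intro Bochner_Integration.integrable_add integrable_mult_right i2 i3)
      fix x :: "real \<times> 'd path"
      obtain s w where x: "x = (s, w)" by (cases x)
      let ?d = "ud (l + h) s w - ud l s w"
      have "?d = h *\<^sub>R ((1 / h) *\<^sub>R ?d)" using False by simp
      then have "(norm ?d)\<^sup>2 = h\<^sup>2 * (norm ((1 / h) *\<^sub>R ?d))\<^sup>2"
        by (metis norm_scaleR power_mult_distrib real_norm_def power2_abs)
      also have "(norm ((1 / h) *\<^sub>R ?d))\<^sup>2 \<le> 2 * (norm ((1 / h) *\<^sub>R ?d - D s w))\<^sup>2 + 2 * (norm (D s w))\<^sup>2"
        using norm_diff_sq[of "(1 / h) *\<^sub>R ?d - D s w" "- D s w"] by simp
      then have "h\<^sup>2 * (norm ((1 / h) *\<^sub>R ?d))\<^sup>2 \<le> h\<^sup>2 * (2 * (norm ((1 / h) *\<^sub>R ?d - D s w))\<^sup>2 + 2 * (norm (D s w))\<^sup>2)"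
        by (intro mult_left_mono) auto
      finally show "(case x of (s, w) \<Rightarrow> (norm (ud (l + h) s w - ud l s w))\<^sup>2) \<le>
          2 * h\<^sup>2 * (case x of (s, w) \<Rightarrow> (norm ((1 / h) *\<^sub>R (ud (l + h) s w - ud l s w) - D s w))\<^sup>2)
              + 2 * h\<^sup>2 * (case x of (s, w) \<Rightarrow> (norm (D s w))\<^sup>2)"
        by (simp add: x algebra_simps)
    qed
    also have "\<dots> = B h"
      using i2 i3 by (simp add: B_def q_def C_def algebra_simps)
    finally show ?thesis .
  qed
  have "(B \<longlongrightarrow> 2 * 0\<^sup>2 * (0 + C)) (at 0)" unfolding B_def
    by (intro tendsto_intros qlim')
  then have "isCont B 0" unfolding isCont_def by (simp add: B_def)
  moreover have "(\<lambda>n. k n - l) \<longlonglongrightarrow> 0" using kl by (simp add: LIM_zero)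
  ultimately have "(\<lambda>n. B (k n - l)) \<longlonglongrightarrow> B 0" by (rule isCont_tendsto_compose)
  then have Bl: "(\<lambda>n. B (k n - l)) \<longlonglongrightarrow> 0" by (simp add: B_def)
  show ?thesis
  proof (rule squeeze0[OF Bl])
    show "0 \<le> (\<integral>(s, w). (norm (ud (k n) s w - ud l s w))\<^sup>2 \<partial>(T \<Otimes>\<^sub>M \<mu>))" for n
      by (intro integral_nonneg_AE AE_I2) (auto split: prod.split)
    show "(\<integral>(s, w). (norm (ud (k n) s w - ud l s w))\<^sup>2 \<partial>(T \<Otimes>\<^sub>M \<mu>)) \<le> B (k n - l)" for n
      using bnd[of "k n - l"] by simp
  qed
qed


lemma T_int_iff: "integrable T g \<longleftrightarrow> set_integrable lborel {0..1} g"
  for g :: "real \<Rightarrow> 'b::{banach, second_countable_topology}"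
  by (simp add: integrable_restrict_space set_integrable_def)

lemma T_integral: "integral\<^sup>L T g = (LINT s:{0..1}|lborel. g s)"
  for g :: "real \<Rightarrow> 'b::{banach, second_countable_topology}"
  by (simp add: integral_restrict_space set_lebesgue_integral_def)

lemma T_measure: "measure T (space T) = 1"
  by (simp add: measure_restrict_space space_restrict_space)

lemma sec_meas: assumes "sq_int_process \<mu> v" "w \<in> space \<mu>" shows "(\<lambda>s. v s w) \<in> borel_measurable T"
proof -
  have "(\<lambda>(s, w). v s w) \<in> borel_measurable (T \<Otimes>\<^sub>M \<mu>)" by (rule sq_meas[OF assms(1)])
  from measurable_compose[OF measurable_Pair2'[OF assms(2)] this] show ?thesis by simp
qed

lemma le_1_sq: "(x::real) \<le> 1 + x\<^sup>2"
proof -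
  have "0 \<le> (x - 1)\<^sup>2" by simp
  then have "2 * x \<le> x\<^sup>2 + 1" by (simp add: power2_eq_square algebra_simps)
  moreover have "0 \<le> x\<^sup>2" by simp
  ultimately show ?thesis by linarith
qed

lemma sec_int: assumes v: "sq_int_process \<mu> v" and w: "w \<in> space \<mu>" and i: "integrable T (\<lambda>s. (norm (v s w))\<^sup>2)"
  shows "integrable T (\<lambda>s. v s w)"
proof -
  interpret T: finite_measure T by (rule T_fin)
  have i2: "integrable T (\<lambda>s. 1 + (norm (v s w))\<^sup>2)" using i by simp
  show ?thesis
  proof (rule Bochner_Integration.integrable_bound[OF i2 sec_meas[OF v w]])
    show "AE x in T. norm (v x w) \<le> norm (1 + (norm (v x w))\<^sup>2)"
    proof (intro AE_I2)
      fix x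
      have "norm (v x w) \<le> 1 + (norm (v x w))\<^sup>2" by (rule le_1_sq)
      then show "norm (v x w) \<le> norm (1 + (norm (v x w))\<^sup>2)" by simp
    qed
  qed
qed


lemma eps_bound: fixes x e :: real assumes "0 \<le> x" "0 < e" shows "x \<le> e + x\<^sup>2 / e"
proof (cases "x \<le> e")
  case True then show ?thesis using assms by (simp add: add_increasing2)
next
  case False
  then have "x * e \<le> x * x" using assms by (intro mult_left_mono) auto
  then have "x \<le> x\<^sup>2 / e" using assms by (simp add: power2_eq_square field_simps)
  then show ?thesis using assms by linarith
qed

lemma pw_conv:
  assumes w: "w \<in> space \<mu>" and il: "integrable T (\<lambda>s. (norm (ud l s w))\<^sup>2)"
    and ik: "\<And>n. integrable T (\<lambda>s. (norm (ud (k n) s w))\<^sup>2)"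
    and alim: "(\<lambda>n. \<integral>s. (norm (ud (k n) s w - ud l s w))\<^sup>2 \<partial>T) \<longlonglongrightarrow> 0"
  shows "(\<lambda>n. perturb (ud (k n)) w t) \<longlonglongrightarrow> perturb (ud l) w t"
proof (cases "t \<in> {0..1}")
  case False
  have "set_integrable lborel {0..1} (\<lambda>s. (norm (ud (k n) s w))\<^sup>2)" for n using ik[of n] by (simp add: T_int_iff)
  moreover have "set_integrable lborel {0..1} (\<lambda>s. (norm (ud l s w))\<^sup>2)" using il by (simp add: T_int_iff)
  ultimately have "perturb (ud (k n)) w t = 0" "perturb (ud l) w t = 0" for n
    using False by (auto simp: perturb_def)
  then show ?thesis by simp
next
  case True
  interpret T: finite_measure T by (rule T_fin)
  have VIl: "integrable T (\<lambda>s. ud l s w)" by (rule sec_int[OF sqint w il])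
  have VIk: "integrable T (\<lambda>s. ud (k n) s w)" for n by (rule sec_int[OF sqint w ik])
  have ml: "(\<lambda>s. ud l s w) \<in> borel_measurable T" by (rule sec_meas[OF sqint w])
  have mk: "(\<lambda>s. ud (k n) s w) \<in> borel_measurable T" for n by (rule sec_meas[OF sqint w])
  have pl: "perturb (ud l) w t = w t + (LINT s:{0..t}|lborel. ud l s w)"
    using il True by (simp add: perturb_def T_int_iff)
  have pk: "perturb (ud (k n)) w t = w t + (LINT s:{0..t}|lborel. ud (k n) s w)" for n
    using ik[of n] True by (simp add: perturb_def T_int_iff)
  have sub: "{0..t} \<in> sets lborel" "{0..t} \<subseteq> {0..1::real}" using True by auto
  have Sl: "set_integrable lborel {0..t} (\<lambda>s. ud l s w)"
    using set_integrable_subset[OF VIl[unfolded T_int_iff] sub] .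
  have Sk: "set_integrable lborel {0..t} (\<lambda>s. ud (k n) s w)" for n
    using set_integrable_subset[OF VIk[of n, unfolded T_int_iff] sub] .
  define b where "b n = (\<integral>s. norm (ud (k n) s w - ud l s w) \<partial>T)" for n
  have dint: "integrable T (\<lambda>s. norm (ud (k n) s w - ud l s w))" for n using VIk VIl by auto
  have d2int: "integrable T (\<lambda>s. (norm (ud (k n) s w - ud l s w))\<^sup>2)" for n
  proof (rule Bochner_Integration.integrable_bound[where f="\<lambda>s. 2 * (norm (ud (k n) s w))\<^sup>2 + 2 * (norm (ud l s w))\<^sup>2"])
    show "integrable T (\<lambda>s. 2 * (norm (ud (k n) s w))\<^sup>2 + 2 * (norm (ud l s w))\<^sup>2)" using ik il by auto
    show "(\<lambda>s. (norm (ud (k n) s w - ud l s w))\<^sup>2) \<in> borel_measurable T" using mk ml by measurable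
    show "AE x in T. norm ((norm (ud (k n) x w - ud l x w))\<^sup>2) \<le> norm (2 * (norm (ud (k n) x w))\<^sup>2 + 2 * (norm (ud l x w))\<^sup>2)"
      by (intro AE_I2) (simp add: norm_diff_sq)
  qed
  have bnd: "norm (perturb (ud (k n)) w t - perturb (ud l) w t) \<le> b n" for n
  proof -
    have "perturb (ud (k n)) w t - perturb (ud l) w t = (LINT s:{0..t}|lborel. ud (k n) s w - ud l s w)"
      unfolding pk pl using set_integral_diff(2)[OF Sk Sl] by simp
    also have "norm \<dots> \<le> (LINT s:{0..t}|lborel. norm (ud (k n) s w - ud l s w))"
      by (rule set_integral_norm_bound) (rule set_integral_diff(1)[OF Sk Sl])
    also have "\<dots> \<le> (LINT s:{0..1}|lborel. norm (ud (k n) s w - ud l s w))"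
    proof -
      have i1: "set_integrable lborel {0..1} (\<lambda>s. norm (ud (k n) s w - ud l s w))"
        using dint[of n] by (simp add: T_int_iff)
      have i0: "set_integrable lborel {0..t} (\<lambda>s. norm (ud (k n) s w - ud l s w))"
        by (rule set_integrable_subset[OF i1 sub])
      show ?thesis unfolding set_lebesgue_integral_def
        by (rule integral_mono[OF i0[unfolded set_integrable_def] i1[unfolded set_integrable_def]])
           (use sub in \<open>auto split: split_indicator\<close>)
    qed
    also have "\<dots> = b n" unfolding b_def by (simp add: T_integral)
    finally show ?thesis .
  qed
  have blim: "b \<longlonglongrightarrow> 0"
  proof (rule tendsto0_eps)
    show "0 \<le> b n" for n unfolding b_def by simp
    fix e0 :: real assume e0: "0 < e0"
    define e where "e = e0 / 2"
    have e: "0 < e" using e0 by (simp add: e_def)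
    have "eventually (\<lambda>n. (\<integral>s. (norm (ud (k n) s w - ud l s w))\<^sup>2 \<partial>T) < e * e) sequentially"
      using alim e by (intro order_tendstoD) auto
    then show "eventually (\<lambda>n. b n \<le> e0) sequentially"
    proof eventually_elim
      case (elim n)
      have "b n \<le> (\<integral>s. e + (norm (ud (k n) s w - ud l s w))\<^sup>2 / e \<partial>T)"
        unfolding b_def by (rule integral_mono[OF dint]) (use d2int e in \<open>auto intro: eps_bound\<close>)
      also have "\<dots> = e * measure T (space T) + (\<integral>s. (norm (ud (k n) s w - ud l s w))\<^sup>2 \<partial>T) / e"
        using d2int[of n] by simp
      also have "\<dots> \<le> e + e" using elim e T_measure by (simp add: field_simps)
      finally show ?case by (simp add: e_def)
    qed
  qed
  have "(\<lambda>n. norm (perturb (ud (k n)) w t - perturb (ud l) w t)) \<longlonglongrightarrow> 0"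
    by (rule squeeze0[OF blim]) (auto intro: bnd)
  then show ?thesis by (simp add: tendsto_norm_zero_iff LIM_zero_iff)
qed


lemma perturb_conv:
  assumes kl: "k \<longlonglongrightarrow> l"
  shows "\<exists>r::nat\<Rightarrow>nat. strict_mono r \<and> (AE w in \<mu>. \<forall>t. (\<lambda>n. perturb (ud (k (r n))) w t) \<longlonglongrightarrow> perturb (ud l) w t)"
proof -
  interpret P: pair_sigma_finite T \<mu> by (rule pair)
  define a where "a n w = (\<integral>s. (norm (ud (k n) s w - ud l s w))\<^sup>2 \<partial>T)" for n w
  have fi: "integrable (T \<Otimes>\<^sub>M \<mu>) (\<lambda>(s, w). (norm (ud (k n) s w - ud l s w))\<^sup>2)" for n
    by (rule sq_diff_int[OF sqint sqint])
  have ai: "integrable \<mu> (a n)" for n unfolding a_def using P.integrable_snd[OF fi[of n]] .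
  have aint: "integral\<^sup>L \<mu> (a n) = (\<integral>(s, w). (norm (ud (k n) s w - ud l s w))\<^sup>2 \<partial>(T \<Otimes>\<^sub>M \<mu>))" for n
    unfolding a_def using P.integral_snd[OF fi[of n]] .
  have an: "norm (a n w) = a n w" for n w unfolding a_def by (simp add: integral_nonneg)
  have "(\<lambda>n. \<integral>w. norm (a n w) \<partial>\<mu>) \<longlonglongrightarrow> 0"
    unfolding an using ud_L2[OF kl] by (simp add: aint[symmetric] del: real_norm_def)
  then have "\<exists>r::nat\<Rightarrow>nat. strict_mono r \<and> (AE x in \<mu>. (\<lambda>n. a (r n) x) \<longlonglongrightarrow> 0)"
    by (intro tendsto_L1_AE_subseq ai)
  then obtain r :: "nat \<Rightarrow> nat" where r: "strict_mono r" and alim: "AE w in \<mu>. (\<lambda>n. a (r n) w) \<longlonglongrightarrow> 0"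
    by blast
  have Il: "AE w in \<mu>. integrable T (\<lambda>s. (norm (ud l s w))\<^sup>2)"
    using P.AE_integrable_snd[OF sq_int[OF sqint[of l]]] by simp
  have Ik: "AE w in \<mu>. \<forall>n. integrable T (\<lambda>s. (norm (ud (k (r n)) s w))\<^sup>2)"
    unfolding AE_all_countable using P.AE_integrable_snd[OF sq_int[OF sqint]] by simp
  have "AE w in \<mu>. \<forall>t. (\<lambda>n. perturb (ud (k (r n))) w t) \<longlonglongrightarrow> perturb (ud l) w t"
    using alim Il Ik AE_space
  proof eventually_elim
    case (elim w)
    show ?case
    proof
      fix t
      show "(\<lambda>n. perturb (ud (k (r n))) w t) \<longlonglongrightarrow> perturb (ud l) w t"
        by (rule pw_conv[where k="\<lambda>n. k (r n)"]) (use elim in \<open>auto simp: a_def\<close>)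
    qed
  qed
  then show ?thesis using r by blast
qed

end


lemma at_to_seq:
  fixes f :: "real \<Rightarrow> real"
  assumes "(f \<longlongrightarrow> 0) (at l)" "f l = 0" "k \<longlonglongrightarrow> l"
  shows "(\<lambda>n. f (k n)) \<longlonglongrightarrow> 0"
proof -
  have "isCont f l" unfolding isCont_def using assms(1,2) by simp
  from isCont_tendsto_compose[OF this assms(3)] show ?thesis using assms(2) by simp
qed

lemma young_h:
  fixes a x ps s :: real
  assumes a: "0 \<le> a" and x: "0 \<le> x" and ps: "1 < ps" and s: "ps < s"
  shows "a powr ps * x powr (ps - 1) \<le> a powr s + 1 * (1 + x powr (max 1 ((ps - 1) * ((s / ps) / (s / ps - 1)))))"
proof -
  define A where "A = s / ps"
  define B where "B = A / (A - 1)"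
  have A1: "1 < A" using ps s by (simp add: A_def field_simps)
  have B1: "1 < B" using A1 by (simp add: B_def field_simps)
  have AB: "1 / A + 1 / B = 1" using A1 by (simp add: B_def field_simps)
  have "a powr ps * x powr (ps - 1) \<le> (a powr ps) powr A / A + (x powr (ps - 1)) powr B / B"
    by (rule Youngs_inequality[OF A1 B1 AB]) auto
  also have "(a powr ps) powr A = a powr s" using ps by (simp add: powr_powr A_def)
  also have "(x powr (ps - 1)) powr B = x powr ((ps - 1) * B)" by (simp add: powr_powr)
  also have "a powr s / A \<le> a powr s" using A1 by (simp add: divide_le_eq mult_le_cancel_left1 )
  also have "x powr ((ps - 1) * B) / B \<le> x powr ((ps - 1) * B)" using B1 by (simp add: divide_le_eq mult_le_cancel_left1)
  also have "x powr ((ps - 1) * B) \<le> 1 + x powr (max 1 ((ps - 1) * B))"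
    by (rule powr_le_1_plus_gen) (use x ps B1 in auto)
  finally show ?thesis by (simp add: B_def A_def)
qed

lemma bdd_h:
  fixes a x ps C :: real
  assumes a: "0 \<le> a" "a \<le> C" and x: "0 \<le> x" and ps: "1 < ps"
  shows "a powr ps * x powr (ps - 1) \<le> 0 + \<bar>C\<bar> powr ps * (1 + x powr (max 1 (ps - 1)))"
proof -
  have "a powr ps \<le> \<bar>C\<bar> powr ps" using a ps by (intro powr_mono2) auto
  moreover have "x powr (ps - 1) \<le> 1 + x powr (max 1 (ps - 1))"
    by (rule powr_le_1_plus_gen) (use x ps in auto)
  ultimately show ?thesis by (simp add: mult_mono)
qed

theorem proposition1:
  fixes \<mu> :: "'d::finite path measure"
    and ud :: "real \<Rightarrow> real \<Rightarrow> 'd path \<Rightarrow> real^'d"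
    and I :: "real \<Rightarrow> 'd path \<Rightarrow> real"
    and L :: "real \<Rightarrow> 'd path \<Rightarrow> real"
    and F :: "'d path \<Rightarrow> real"
    and g :: "real \<Rightarrow> 'd path \<Rightarrow> real"
    and p :: real
  assumes wiener: "wiener_measure \<mu>"
    and adapt: "\<And>l. adapted \<mu> (ud l)"
    and sqint: "\<And>l. sq_int_process \<mu> (ud l)"
    and ito: "\<And>l. ito_integral \<mu> (ud l) (I l)"
    and girsanov: "\<And>l. (\<integral>\<^sup>+ w. ennreal (exp (- I l w - H_norm_sq (\<lambda>s. ud l s w) / 2)) \<partial>\<mu>) = 1"
    and diff: "\<And>l. \<exists>D. sq_int_process \<mu> D \<and>
        ((\<lambda>h. \<integral>(s, w). (norm ((1 / h) *\<^sub>R (ud (l + h) s w - ud l s w) - D s w))\<^sup>2 \<partial>time_path \<mu>)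
          \<longlongrightarrow> 0) (at 0)"
    and bdd: "\<exists>C. \<forall>l. AE w in \<mu>. H_norm_sq (\<lambda>s. ud l s w) \<le> C"
    and U_meas: "\<And>l. perturb (ud l) \<in> measurable \<mu> \<mu>"
    and L_meas: "\<And>l. L l \<in> borel_measurable \<mu>"
    and L_nonneg: "\<And>l w. 0 \<le> L l w"
    and L_density: "\<And>l. distr \<mu> \<mu> (perturb (ud l)) = density \<mu> (\<lambda>w. ennreal (L l w))"
    and L_pos: "\<And>l. AE w in \<mu>. 0 < L l w"
    and L_as_cont: "AE w in \<mu>. continuous_on UNIV (\<lambda>l. L l w)"
    and Linv_as_cont: "AE w in \<mu>. continuous_on UNIV (\<lambda>l. 1 / L l w)"
    and L_Lp: "\<And>q l. 1 \<le> q \<Longrightarrow> integrable \<mu> (\<lambda>w. \<bar>L l w\<bar> powr q) \<and>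
        ((\<lambda>k. \<integral>w. \<bar>L k w - L l w\<bar> powr q \<partial>\<mu>) \<longlongrightarrow> 0) (at l)"
    and Linv_Lp: "\<And>q l. 1 \<le> q \<Longrightarrow> integrable \<mu> (\<lambda>w. \<bar>1 / L l w\<bar> powr q) \<and>
        ((\<lambda>k. \<integral>w. \<bar>1 / L k w - 1 / L l w\<bar> powr q \<partial>\<mu>) \<longlongrightarrow> 0) (at l)"
    and p_gt: "1 < p"
    and F_meas: "F \<in> borel_measurable \<mu>"
    and F_Lp: "integrable \<mu> (\<lambda>w. \<bar>F w\<bar> powr p)"
    and g_meas: "\<And>l. g l \<in> borel_measurable \<mu>"
    and g_cond: "\<And>l. AE w in \<mu>.
        real_cond_exp \<mu> (vimage_algebra (space \<mu>) (perturb (ud l)) \<mu>) F w = g l (perturb (ud l) w)"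
  shows "\<forall>p'. 1 \<le> p' \<and> p' < p \<longrightarrow>
      (\<forall>l. integrable \<mu> (\<lambda>w. \<bar>g l w\<bar> powr p')) \<and>
      (\<forall>h \<in> borel_measurable \<mu>.
         (if p' = 1 then (\<exists>C. AE w in \<mu>. \<bar>h w\<bar> \<le> C)
          else integrable \<mu> (\<lambda>w. \<bar>h w\<bar> powr (p' / (p' - 1)))) \<longrightarrow>
         continuous_on UNIV (\<lambda>l. \<integral>w. g l w * h w \<partial>\<mu>))"
proof -
  have prob: "prob_space \<mu>" using wiener by (simp add: wiener_measure_def)
  interpret prob_space \<mu> by (rule prob)
  have sets_mu: "sets \<mu> = sets (filt 1)" using wiener by (simp add: wiener_measure_def path_space_def)
  have space_mu: "space \<mu> = path_carrier" using sets_eq_imp_space_eq[OF sets_mu] by (simp add: space_filt)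
  define U where "U l = perturb (ud l)" for l
  have Linv_int: "integrable \<mu> (\<lambda>w. \<bar>1 / L l w\<bar> powr q)" if "1 \<le> q" for q l using Linv_Lp[OF that] by blast
  interpret S1: S1 \<mu> U L g F p
    by unfold_locales (use U_meas L_meas L_nonneg L_density L_pos Linv_int p_gt F_meas F_Lp g_meas g_cond in \<open>auto simp: U_def\<close>)
  have L1seq: "(\<lambda>n. \<integral>w. \<bar>L (k n) w - L l w\<bar> \<partial>\<mu>) \<longlonglongrightarrow> 0" if "k \<longlonglongrightarrow> l" for k l
  proof (rule at_to_seq[OF _ _ that])
    show "((\<lambda>k. \<integral>w. \<bar>L k w - L l w\<bar> \<partial>\<mu>) \<longlongrightarrow> 0) (at l)" using L_Lp[of 1 l] by simp
  qed simp
  have Linvseq: "(\<lambda>n. \<integral>w. \<bar>1 / L (k n) w - 1 / L l w\<bar> powr q \<partial>\<mu>) \<longlonglongrightarrow> 0"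
    if "1 \<le> q" "k \<longlonglongrightarrow> l" for q k l
  proof (rule at_to_seq[OF _ _ that(2)])
    show "((\<lambda>k. \<integral>w. \<bar>1 / L k w - 1 / L l w\<bar> powr q \<partial>\<mu>) \<longlongrightarrow> 0) (at l)" using Linv_Lp[OF that(1)] by blast
  qed simp
  have L_int: "integrable \<mu> (L l)" for l using L_Lp[of 1 l] L_nonneg by simp
  interpret S2: S2 \<mu> U L g F p
    by unfold_locales (use L_as_cont Linv_as_cont L1seq Linvseq L_int in auto)
  have subconv: "\<exists>r::nat\<Rightarrow>nat. strict_mono r \<and>
        (\<forall>f \<in> (borel_measurable \<mu> :: ('d path \<Rightarrow> real) set). (\<lambda>n. \<integral>w. min 1 \<bar>f (U (k (r n)) w) - f (U l w)\<bar> \<partial>\<mu>) \<longlonglongrightarrow> 0)"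
    if kl: "k \<longlonglongrightarrow> l" for k l
  proof -
    interpret PA: PA \<mu> ud by unfold_locales (use sqint diff in auto)
    obtain r :: "nat \<Rightarrow> nat" where r: "strict_mono r"
      and pc: "AE w in \<mu>. \<forall>t. (\<lambda>n. perturb (ud (k (r n))) w t) \<longlonglongrightarrow> perturb (ud l) w t"
      using PA.perturb_conv[OF kl] by blast
    have krl: "(\<lambda>n. k (r n)) \<longlonglongrightarrow> l" using LIMSEQ_subseq_LIMSEQ[OF kl r] by (simp add: o_def)
    interpret PC: PCgen2 \<mu> "\<lambda>n. U (k (r n))" "U l" "\<lambda>n. L (k (r n))" "L l" GG
    proof unfold_locales
      show "(\<lambda>n. \<integral>w. \<bar>L (k (r n)) w - L l w\<bar> \<partial>\<mu>) \<longlonglongrightarrow> 0" by (rule L1seq[OF krl])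
      show "Int_stable GG" by (rule GG_Int_stable)
      show "GG \<subseteq> Pow (space \<mu>)" using GG_sub by (simp add: space_mu)
      show "sigma_sets (space \<mu>) GG = sets \<mu>" using GG_sigma by (simp add: space_mu sets_mu)
      fix A :: "'d path set" assume A: "A \<in> GG"
      show "AE w in \<mu>. U l w \<in> A \<longrightarrow> eventually (\<lambda>n. U (k (r n)) w \<in> A) sequentially"
        using pc AE_space
      proof eventually_elim
        case (elim w)
        show ?case
        proof
          assume "U l w \<in> A"
          show "eventually (\<lambda>n. U (k (r n)) w \<in> A) sequentially"
          proof (rule GG_open[OF A])
            show "\<forall>t. (\<lambda>n. U (k (r n)) w t) \<longlonglongrightarrow> U l w t" using elim by (simp add: U_def)
            show "U (k (r n)) w \<in> path_carrier" for n
              using measurable_space[OF U_meas[of "k (r n)"] elim(2)] by (simp add: U_def space_mu)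
          qed fact
        qed
      qed
    qed (use U_meas L_meas L_nonneg L_density L_int in \<open>auto simp: U_def\<close>)
    show ?thesis using r PC.PP_all unfolding PC.PP_def by blast
  qed
  show ?thesis
  proof (intro allI impI conjI ballI)
    fix p' l :: real assume p': "1 \<le> p' \<and> p' < p"
    show "integrable \<mu> (\<lambda>w. \<bar>g l w\<bar> powr p')" using S1.part1 p' by blast
  next
    fix p' :: real and h :: "'d path \<Rightarrow> real" assume p': "1 \<le> p' \<and> p' < p" and hm: "h \<in> borel_measurable \<mu>"
    assume hc: "if p' = 1 then (\<exists>C. AE w in \<mu>. \<bar>h w\<bar> \<le> C) else integrable \<mu> (\<lambda>w. \<bar>h w\<bar> powr (p' / (p' - 1)))"
    have ps: "1 < p / (p - 1)" using p_gt by (simp add: field_simps)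
    obtain D K Q where DKQ: "integrable \<mu> D" "0 \<le> K" "1 \<le> Q"
      "AE w in \<mu>. \<forall>x\<ge>0. \<bar>h w\<bar> powr (p / (p - 1)) * x powr (p / (p - 1) - 1) \<le> D w + K * (1 + x powr Q)"
    proof (cases "p' = 1")
      case True
      then obtain C where C: "AE w in \<mu>. \<bar>h w\<bar> \<le> C" using hc by auto
      show ?thesis
      proof (rule that[of "\<lambda>w. 0" "\<bar>C\<bar> powr (p / (p - 1))" "max 1 (p / (p - 1) - 1)"])
        show "AE w in \<mu>. \<forall>x\<ge>0. \<bar>h w\<bar> powr (p / (p - 1)) * x powr (p / (p - 1) - 1)
            \<le> 0 + \<bar>C\<bar> powr (p / (p - 1)) * (1 + x powr max 1 (p / (p - 1) - 1))"
          using C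
        proof eventually_elim
          case (elim w)
          show ?case
          proof (intro allI impI)
            fix x :: real assume x: "0 \<le> x"
            show "\<bar>h w\<bar> powr (p / (p - 1)) * x powr (p / (p - 1) - 1)
              \<le> 0 + \<bar>C\<bar> powr (p / (p - 1)) * (1 + x powr max 1 (p / (p - 1) - 1))"
              by (rule bdd_h[OF abs_ge_zero elim x ps])
          qed
        qed
      qed auto
    next
      case False
      then have hi: "integrable \<mu> (\<lambda>w. \<bar>h w\<bar> powr (p' / (p' - 1)))" using hc by simp
      have p'1: "1 < p'" using False p' by auto
      have lt: "p / (p - 1) < p' / (p' - 1)" using p' p'1 p_gt by (simp add: field_simps)
      show ?thesis
      proof (rule that[of "\<lambda>w. \<bar>h w\<bar> powr (p' / (p' - 1))" 1
            "max 1 ((p / (p - 1) - 1) * ((p' / (p' - 1)) / (p / (p - 1)) / ((p' / (p' - 1)) / (p / (p - 1)) - 1)))"])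
        show "AE w in \<mu>. \<forall>x\<ge>0. \<bar>h w\<bar> powr (p / (p - 1)) * x powr (p / (p - 1) - 1)
            \<le> \<bar>h w\<bar> powr (p' / (p' - 1)) + 1 * (1 + x powr max 1 ((p / (p - 1) - 1) * ((p' / (p' - 1)) / (p / (p - 1)) / ((p' / (p' - 1)) / (p / (p - 1)) - 1))))"
          by (intro AE_I2 allI impI young_h ps lt) auto
      qed (use hi in auto)
    qed
    interpret S3: S3 \<mu> U L g F p h D K Q
      by unfold_locales (use hm DKQ subconv in auto)
    show "continuous_on UNIV (\<lambda>l. \<integral>w. g l w * h w \<partial>\<mu>)" by (rule S3.main_cont)
  qed
qed


end
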